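(* Let $(Q,P)$ be a weakly quasi-lattice ordered group and let $\Lambda$ be a finitely aligned $P$-graph (i.e. $\mathrm{FA}(\Lambda)=\Lambda$). Then the map $$G^{\mathrm{Spi}}_\Lambda\to\mathcal{G}(\Lambda),\qquad [\alpha,\beta,x]\mapsto(\alpha\cdot x,\ d(\alpha)d(\beta)^{-1},\ \beta\cdot x)$$ is a topological groupoid isomorphism. Moreover, the reductions $G^{\mathrm{Spi}}_\Lambda|_{\partial\Lambda}$ and $\partial\mathcal{G}(\Lambda)$ are topologically isomorphic.
   Context: $(Q,P)$ weakly quasi-lattice ordered: $Q$ a discrete group, $P\subseteq Q$ a subsemigroup containing the identity $e$ with $P\cap P^{-1}=\{e\}$, and, with $p\le r$ meaning $pq=r$ for some $q\in P$, any two elements of $P$ with a common upper bound have a least common upper bound. A $P$-graph is a countable small category $\Lambda$ (identities $\Lambda^{(0)}$, range/source $r,s$) with a functor $d:\Lambda\to P$ with unique factorisation (if $d(\lambda)=pq$ there are unique $\mu,\nu$ with $\lambda=\mu\nu$, $d(\mu)=p$, $d(\nu)=q$). Write $\Lambda^m=d^{-1}(m)$, $\lambda\Lambda=\{\lambda\mu: s(\lambda)=r(\mu)\}$, $\mu\preceq\lambda$ iff $\lambda\in\mu\Lambda$. $\Lambda$ is finitely aligned if for all $\mu,\nu$ there is finite $J$ with $\mu\Lambda\cap\nu\Lambda=\bigcup_{\kappa\in J}\kappa\Lambda$. A filter is a nonempty hereditary and directed subset of $\Lambda$ (w.r.t. $\preceq$); $\mathcal{F}(\Lambda)$ the filters,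 $\mathcal{U}(\Lambda)$ the maximal filters; each filter $x$ contains a unique $r(x)\in\Lambda^{(0)}$. For a filter $x$ with $r(x)=s(\alpha)$, $\alpha\cdot x=\{\zeta: \zeta\preceq\alpha\gamma\text{ for some }\gamma\in x\}$. $\mathcal{F}(\Lambda)$ has the subspace topology from $\mathcal{P}(\Lambda)\cong\{0,1\}^\Lambda$ (product topology). Since $\Lambda$ is finitely aligned, the path space is $\mathcal{F}(\Lambda)$. For $x\in\mathcal{F}(\Lambda)$, $m\in P$ with $x\cap\Lambda^m\neq\emptyset$ (write $x\in\mathrm{dom}(m)$), $x(0,m)$ is the unique element of $x\cap\Lambda^m$ and $x\cdot m=\{\mu: x(0,m)\mu\in x\}$. The path groupoid $\mathcal{G}(\Lambda)$ is the set of $(x,q,y)\in\mathcal{F}(\Lambda)\times Q\times\mathcal{F}(\Lambda)$ such that $q=mn^{-1}$, $x\in\mathrm{dom}(m)$, $y\in\mathrm{dom}(n)$, $x\cdot m=y\cdot n$ for some $m,n\in P$; product $(x,q,y)(y,r,z)=(x,qr,z)$, inverse $(y,q^{-1},x)$; topology with basis $\{(x,mn^{-1},y)\in\mathcal{G}(\Lambda): x\in U, y\in V, x\cdot m=y\cdot n\}$, $m,n\in P$, $U,V$ open. The boundary-path groupoid $\partial\mathcal{G}(\Lambda)$ is the reduction of $\mathcal{G}(\Lambda)$ (unit space identified with $\mathcal{F}(\Lambda)$ via $x\mapsto(x,e,x)$) to the closure $\partial\Lambda$ of $\mathcal{U}(\Lambda)$ in $\mathcal{F}(\Lambda)$. Spielberg's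 groupoid: for $\alpha\in\Lambda$ and $\beta_1,\dots,\beta_n\in\alpha\Lambda\setminus\{\alpha\}$, put $E=\alpha\Lambda\setminus\bigcup_i\beta_i\Lambda$ and $\hat E=\{x\in\mathcal{F}(\Lambda): x\cap\gamma\Lambda\subseteq E\text{ for some }\gamma\in x\}$; the sets $\hat E$ form a basis of a topology $\tau$ on $\mathcal{F}(\Lambda)$. On $\{(\alpha,\beta,x)\in\Lambda\times\Lambda\times\mathcal{F}(\Lambda): s(\alpha)=s(\beta)=r(x)\}$ set $(\alpha,\beta,x)\sim(\alpha',\beta',x')$ iff there are $y\in\mathcal{F}(\Lambda)$, $\gamma,\gamma'\in\Lambda$ with $x=\gamma\cdot y$, $x'=\gamma'\cdot y$, $\alpha\gamma=\alpha'\gamma'$, $\beta\gamma=\beta'\gamma'$; this is an equivalence relation, and $G^{\mathrm{Spi}}_\Lambda$ is the set of classes $[\alpha,\beta,x]$. A pair $([\alpha,\beta,x],[\gamma,\delta,y])$ is composable iff $\beta\cdot x=\gamma\cdot y$; then there are $z\in\mathcal{F}(\Lambda)$, $\xi,\eta\in\Lambda$ with $x=\xi\cdot z$, $y=\eta\cdot z$, $\beta\xi=\gamma\eta$, and the product is $[\alpha\xi,\delta\eta,z]$; inverse $[\alpha,\beta,x]^{-1}=[\beta,\alpha,x]$. Its topology has basis the sets $[\alpha,\beta,B]=\{[\alpha,\beta,x]: x\in B\}$ for $B$ in a basis of $\tau$. $G^{\mathrm{Spi}}_\Lambda|_{\partial\Lambda}$ is its reduction to $\partial\Lambda$ (unit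 space identified with $\mathcal{F}(\Lambda)$ via $x\mapsto[r(x),r(x),x]$). *)

theory Defs
  imports "HOL-Analysis.Analysis"
begin

text \<open>The group Q is a type of class group_add (written additively, not necessarily
abelian): the paper's product pq is p + q, the identity e is 0, and
m n^{-1} is m - n.  P is a subset of Q.\<close>

definition ple :: "'q::group_add set \<Rightarrow> 'q \<Rightarrow> 'q \<Rightarrow> bool" where
  "ple P p r \<longleftrightarrow> (\<exists>q\<in>P. p + q = r)"

definition wqlo :: "'q::group_add set \<Rightarrow> bool" where
  "wqlo P \<longleftrightarrow>
     0 \<in> P \<and> (\<forall>p\<in>P. \<forall>q\<in>P. p + q \<in> P) \<and> P \<inter> uminus ` P = {0} \<and>
     (\<forall>p\<in>P. \<forall>q\<in>P. (\<exists>u\<in>P. ple P p u \<and> ple P q u) \<longrightarrow>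
        (\<exists>l\<in>P. ple P p l \<and> ple P q l \<and> (\<forall>u\<in>P. ple P p u \<and> ple P q u \<longrightarrow> ple P l u)))"

text \<open>A small category: morphisms Mor, identities Obj (a subset of Mor), range rng,
source src, (partial) composition cmp (meaningful when src l = rng m), degree functor deg.\<close>

record ('a, 'q) pgraph =
  Mor :: "'a set"
  Obj :: "'a set"
  rng :: "'a \<Rightarrow> 'a"
  src :: "'a \<Rightarrow> 'a"
  cmp :: "'a \<Rightarrow> 'a \<Rightarrow> 'a"
  deg :: "'a \<Rightarrow> 'q"

definition is_pgraph :: "'q::group_add set \<Rightarrow> ('a, 'q) pgraph \<Rightarrow> bool" where
  "is_pgraph P L \<longleftrightarrow>
     countable (Mor L) \<and> Obj L \<subseteq> Mor L \<and>
     (\<forall>l\<in>Mor L. rng L l \<in> Obj L \<and> src L l \<in> Obj L) \<and>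
     (\<forall>v\<in>Obj L. rng L v = v \<and> src L v = v) \<and>
     (\<forall>l\<in>Mor L. cmp L (rng L l) l = l \<and> cmp L l (src L l) = l) \<and>
     (\<forall>l\<in>Mor L. \<forall>m\<in>Mor L. src L l = rng L m \<longrightarrow>
        cmp L l m \<in> Mor L \<and> rng L (cmp L l m) = rng L l \<and> src L (cmp L l m) = src L m) \<and>
     (\<forall>l\<in>Mor L. \<forall>m\<in>Mor L. \<forall>n\<in>Mor L. src L l = rng L m \<and> src L m = rng L n \<longrightarrow>
        cmp L (cmp L l m) n = cmp L l (cmp L m n)) \<and>
     (\<forall>l\<in>Mor L. deg L l \<in> P) \<and>
     (\<forall>l\<in>Mor L. \<forall>m\<in>Mor L. src L l = rng L m \<longrightarrow> deg L (cmp L l m) = deg L l + deg L m) \<and>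
     (\<forall>l\<in>Mor L. \<forall>p\<in>P. \<forall>q\<in>P. deg L l = p + q \<longrightarrow>
        (\<exists>!(m, n). m \<in> Mor L \<and> n \<in> Mor L \<and> src L m = rng L n \<and>
                   cmp L m n = l \<and> deg L m = p \<and> deg L n = q))"

definition ext :: "('a, 'q) pgraph \<Rightarrow> 'a \<Rightarrow> 'a set" where
  "ext L l = {cmp L l m | m. m \<in> Mor L \<and> src L l = rng L m}"

definition pre :: "('a, 'q) pgraph \<Rightarrow> 'a \<Rightarrow> 'a \<Rightarrow> bool" where
  "pre L m l \<longleftrightarrow> m \<in> Mor L \<and> l \<in> ext L m"

definition finitely_aligned :: "('a, 'q) pgraph \<Rightarrow> bool" where
  "finitely_aligned L \<longleftrightarrow>
     (\<forall>m\<in>Mor L. \<forall>n\<in>Mor L. \<exists>J. finite J \<and> J \<subseteq> Mor L \<and>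
        ext L m \<inter> ext L n = (\<Union>k\<in>J. ext L k))"

definition is_filter :: "('a, 'q) pgraph \<Rightarrow> 'a set \<Rightarrow> bool" where
  "is_filter L x \<longleftrightarrow> x \<subseteq> Mor L \<and> x \<noteq> {} \<and>
     (\<forall>l\<in>x. \<forall>m. pre L m l \<longrightarrow> m \<in> x) \<and>
     (\<forall>l\<in>x. \<forall>m\<in>x. \<exists>k\<in>x. pre L l k \<and> pre L m k)"

definition filters :: "('a, 'q) pgraph \<Rightarrow> 'a set set" where
  "filters L = {x. is_filter L x}"

definition max_filters :: "('a, 'q) pgraph \<Rightarrow> 'a set set" where
  "max_filters L = {x \<in> filters L. \<forall>y\<in>filters L. x \<subseteq> y \<longrightarrow> y = x}"

definition frng :: "('a, 'q) pgraph \<Rightarrow> 'a set \<Rightarrow> 'a" where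
  "frng L x = (THE v. v \<in> Obj L \<and> v \<in> x)"

definition fcat :: "('a, 'q) pgraph \<Rightarrow> 'a \<Rightarrow> 'a set \<Rightarrow> 'a set" where
  "fcat L a x = {z. \<exists>g\<in>x. src L a = rng L g \<and> pre L z (cmp L a g)}"

definition in_dom :: "('a, 'q) pgraph \<Rightarrow> 'a set \<Rightarrow> 'q \<Rightarrow> bool" where
  "in_dom L x m \<longleftrightarrow> (\<exists>l\<in>x. deg L l = m)"

definition seg :: "('a, 'q) pgraph \<Rightarrow> 'a set \<Rightarrow> 'q \<Rightarrow> 'a" where
  "seg L x m = (THE l. l \<in> x \<and> deg L l = m)"

definition fshift :: "('a, 'q) pgraph \<Rightarrow> 'a set \<Rightarrow> 'q \<Rightarrow> 'a set" where
  "fshift L x m = {n \<in> Mor L. src L (seg L x m) = rng L n \<and> cmp L (seg L x m) n \<in> x}"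

text \<open>Topology on the filters: subspace of the product topology on P(\<Lambda>) = {0,1}^\<Lambda>,
generated by the cylinder sets {x. l \<in> x} and {x. l \<notin> x}.\<close>
definition filter_top :: "('a, 'q) pgraph \<Rightarrow> 'a set topology" where
  "filter_top L = subtopology
     (topology_generated_by ({{x. l \<in> x} | l. l \<in> Mor L} \<union> {{x. l \<notin> x} | l. l \<in> Mor L}))
     (filters L)"

definition bdry :: "('a, 'q) pgraph \<Rightarrow> 'a set set" where
  "bdry L = (filter_top L) closure_of (max_filters L)"

text \<open>A groupoid is given by its carrier, composability predicate, product and inverse.\<close>
definition top_groupoid_iso ::
  "'g topology \<Rightarrow> 'g set \<Rightarrow> ('g \<Rightarrow> 'g \<Rightarrow> bool) \<Rightarrow> ('g \<Rightarrow> 'g \<Rightarrow> 'g) \<Rightarrow> ('g \<Rightarrow> 'g) \<Rightarrow>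
   'h topology \<Rightarrow> 'h set \<Rightarrow> ('h \<Rightarrow> 'h \<Rightarrow> bool) \<Rightarrow> ('h \<Rightarrow> 'h \<Rightarrow> 'h) \<Rightarrow> ('h \<Rightarrow> 'h) \<Rightarrow>
   ('g \<Rightarrow> 'h) \<Rightarrow> bool" where
  "top_groupoid_iso X G cG mG iG Y H cH mH iH f \<longleftrightarrow>
     bij_betw f G H \<and> homeomorphic_map X Y f \<and>
     (\<forall>a\<in>G. \<forall>b\<in>G. cG a b \<longleftrightarrow> cH (f a) (f b)) \<and>
     (\<forall>a\<in>G. \<forall>b\<in>G. cG a b \<longrightarrow> f (mG a b) = mH (f a) (f b)) \<and>
     (\<forall>a\<in>G. f (iG a) = iH (f a))"

definition pg_set :: "'q::group_add set \<Rightarrow> ('a, 'q) pgraph \<Rightarrow> ('a set \<times> 'q \<times> 'a set) set" where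
  "pg_set P L = {(x, q, y). x \<in> filters L \<and> y \<in> filters L \<and>
     (\<exists>m\<in>P. \<exists>n\<in>P. q = m - n \<and> in_dom L x m \<and> in_dom L y n \<and> fshift L x m = fshift L y n)}"

definition pg_comp :: "('a set \<times> 'q \<times> 'a set) \<Rightarrow> ('a set \<times> 'q \<times> 'a set) \<Rightarrow> bool" where
  "pg_comp g h \<longleftrightarrow> snd (snd g) = fst h"

definition pg_mult :: "('a set \<times> 'q::group_add \<times> 'a set) \<Rightarrow> ('a set \<times> 'q \<times> 'a set) \<Rightarrow> ('a set \<times> 'q \<times> 'a set)" where
  "pg_mult g h = (fst g, fst (snd g) + fst (snd h), snd (snd h))"

definition pg_inv :: "('a set \<times> 'q::group_add \<times> 'a set) \<Rightarrow> ('a set \<times> 'q \<times> 'a set)" where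
  "pg_inv g = (snd (snd g), - fst (snd g), fst g)"

definition pg_top :: "'q::group_add set \<Rightarrow> ('a, 'q) pgraph \<Rightarrow> ('a set \<times> 'q \<times> 'a set) topology" where
  "pg_top P L = subtopology (topology_generated_by
     {{(x, m - n, y) | x y. (x, m - n, y) \<in> pg_set P L \<and> x \<in> U \<and> y \<in> V \<and>
                          in_dom L x m \<and> in_dom L y n \<and> fshift L x m = fshift L y n}
      | m n U V. m \<in> P \<and> n \<in> P \<and> openin (filter_top L) U \<and> openin (filter_top L) V})
     (pg_set P L)"

definition bpg_set :: "'q::group_add set \<Rightarrow> ('a, 'q) pgraph \<Rightarrow> ('a set \<times> 'q \<times> 'a set) set" where
  "bpg_set P L = {g \<in> pg_set P L. fst g \<in> bdry L \<and> snd (snd g) \<in> bdry L}"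

text \<open>Basis of the topology \<tau>: the sets \<hat>E for E = a\<Lambda> minus the union of b\<Lambda> over finitely
many b in a\<Lambda> - {a}.\<close>
definition Ehat :: "('a, 'q) pgraph \<Rightarrow> 'a \<Rightarrow> 'a set \<Rightarrow> 'a set set" where
  "Ehat L a B = {x \<in> filters L. \<exists>g\<in>x. x \<inter> ext L g \<subseteq> ext L a - (\<Union>b\<in>B. ext L b)}"

definition spi_basis :: "('a, 'q) pgraph \<Rightarrow> 'a set set set" where
  "spi_basis L = {Ehat L a B | a B. a \<in> Mor L \<and> finite B \<and> B \<subseteq> ext L a - {a}}"

definition spi_tri :: "('a, 'q) pgraph \<Rightarrow> ('a \<times> 'a \<times> 'a set) set" where
  "spi_tri L = {(a, b, x). a \<in> Mor L \<and> b \<in> Mor L \<and> x \<in> filters L \<and>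
                           src L a = frng L x \<and> src L b = frng L x}"

definition spi_rel :: "('a, 'q) pgraph \<Rightarrow> (('a \<times> 'a \<times> 'a set) \<times> ('a \<times> 'a \<times> 'a set)) set" where
  "spi_rel L = {((a, b, x), (a', b', x')).
     (a, b, x) \<in> spi_tri L \<and> (a', b', x') \<in> spi_tri L \<and>
     (\<exists>y\<in>filters L. \<exists>g\<in>Mor L. \<exists>g'\<in>Mor L.
        src L g = frng L y \<and> src L g' = frng L y \<and>
        src L a = rng L g \<and> src L a' = rng L g' \<and>
        x = fcat L g y \<and> x' = fcat L g' y \<and>
        cmp L a g = cmp L a' g' \<and> cmp L b g = cmp L b' g')}"

definition spi_cls :: "('a, 'q) pgraph \<Rightarrow> 'a \<Rightarrow> 'a \<Rightarrow> 'a set \<Rightarrow> ('a \<times> 'a \<times> 'a set) set" where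
  "spi_cls L a b x = spi_rel L `` {(a, b, x)}"

definition spi_set :: "('a, 'q) pgraph \<Rightarrow> ('a \<times> 'a \<times> 'a set) set set" where
  "spi_set L = spi_tri L // spi_rel L"

definition spi_comp :: "('a, 'q) pgraph \<Rightarrow> ('a \<times> 'a \<times> 'a set) set \<Rightarrow> ('a \<times> 'a \<times> 'a set) set \<Rightarrow> bool" where
  "spi_comp L c d \<longleftrightarrow> (\<exists>a b x a' b' y. (a, b, x) \<in> spi_tri L \<and> (a', b', y) \<in> spi_tri L \<and>
      c = spi_cls L a b x \<and> d = spi_cls L a' b' y \<and> fcat L b x = fcat L a' y)"

definition spi_mult :: "('a, 'q) pgraph \<Rightarrow> ('a \<times> 'a \<times> 'a set) set \<Rightarrow> ('a \<times> 'a \<times> 'a set) set \<Rightarrow> ('a \<times> 'a \<times> 'a set) set" where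
  "spi_mult L c d = (THE e. \<exists>a b x g h y z xi eta.
      (a, b, x) \<in> spi_tri L \<and> (g, h, y) \<in> spi_tri L \<and>
      c = spi_cls L a b x \<and> d = spi_cls L g h y \<and> fcat L b x = fcat L g y \<and>
      z \<in> filters L \<and> xi \<in> Mor L \<and> eta \<in> Mor L \<and>
      src L xi = frng L z \<and> src L eta = frng L z \<and> src L b = rng L xi \<and> src L g = rng L eta \<and>
      x = fcat L xi z \<and> y = fcat L eta z \<and> cmp L b xi = cmp L g eta \<and>
      e = spi_cls L (cmp L a xi) (cmp L h eta) z)"

definition spi_inv :: "('a, 'q) pgraph \<Rightarrow> ('a \<times> 'a \<times> 'a set) set \<Rightarrow> ('a \<times> 'a \<times> 'a set) set" where
  "spi_inv L c = (THE e. \<exists>a b x. (a, b, x) \<in> spi_tri L \<and> c = spi_cls L a b x \<and> e = spi_cls L b a x)"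

definition spi_top :: "('a, 'q) pgraph \<Rightarrow> ('a \<times> 'a \<times> 'a set) set topology" where
  "spi_top L = subtopology (topology_generated_by
     {{spi_cls L a b x | x. x \<in> B \<and> (a, b, x) \<in> spi_tri L} | a b B.
        a \<in> Mor L \<and> b \<in> Mor L \<and> B \<in> spi_basis L})
     (spi_set L)"

definition spi_unit :: "('a, 'q) pgraph \<Rightarrow> 'a set \<Rightarrow> ('a \<times> 'a \<times> 'a set) set" where
  "spi_unit L x = spi_cls L (frng L x) (frng L x) x"

definition bspi_set :: "('a, 'q) pgraph \<Rightarrow> ('a \<times> 'a \<times> 'a set) set set" where
  "bspi_set L = {c \<in> spi_set L. spi_mult L c (spi_inv L c) \<in> spi_unit L ` bdry L \<and>
                               spi_mult L (spi_inv L c) c \<in> spi_unit L ` bdry L}"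

end

theory Submission imports Defs begin

lemma homeo_generated:
  fixes f :: "'g \<Rightarrow> 'h"
  assumes A: "A \<subseteq> \<Union>SX" and B: "B \<subseteq> \<Union>SY" and bij: "bij_betw f A B"
    and i: "\<And>s. s \<in> SX \<Longrightarrow> openin (subtopology (topology_generated_by SY) B) (f ` (s \<inter> A))"
    and ii: "\<And>s. s \<in> SY \<Longrightarrow> openin (subtopology (topology_generated_by SX) A) {p \<in> A. f p \<in> s}"
  shows "homeomorphic_map (subtopology (topology_generated_by SX) A) (subtopology (topology_generated_by SY) B) f"
proof -
  let ?X = "subtopology (topology_generated_by SX) A"
  let ?Y = "subtopology (topology_generated_by SY) B"
  have tX: "topspace ?X = A" using A by auto
  have tY: "topspace ?Y = B" using B by auto
  have inj: "inj_on f A" and im: "f ` A = B" using bij by (auto simp: bij_betw_def)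
  have c1: "openin ?X {p \<in> A. f p \<in> Op}" if "generate_topology_on SY Op" for Op
    using that
  proof induct
    case Empty then show ?case by simp
  next
    case (Int a b)
    have "{p \<in> A. f p \<in> a \<inter> b} = {p \<in> A. f p \<in> a} \<inter> {p \<in> A. f p \<in> b}" by auto
    then show ?case using Int by auto
  next
    case (UN K)
    have "{p \<in> A. f p \<in> \<Union>K} = \<Union>((\<lambda>k. {p \<in> A. f p \<in> k}) ` K)" by auto
    then show ?case using UN by auto
  next
    case (Basis s) then show ?case using ii by auto
  qed
  have c2: "openin ?Y (f ` (Op \<inter> A))" if "generate_topology_on SX Op" for Op
    using that
  proof induct
    case Empty then show ?case by simp
  next
    case (Int a b)
    have "f ` ((a \<inter> b) \<inter> A) = f ` (a \<inter> A) \<inter> f ` (b \<inter> A)" using inj by (auto simp: inj_on_def)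
    then show ?case using Int by auto
  next
    case (UN K)
    have "f ` (\<Union>K \<inter> A) = \<Union>((\<lambda>k. f ` (k \<inter> A)) ` K)" by auto
    then show ?case using UN by auto
  next
    case (Basis s) then show ?case using i by auto
  qed
  show ?thesis
  proof (rule bijective_open_imp_homeomorphic_map)
    show "continuous_map ?X ?Y f"
      unfolding continuous_map_def
    proof (intro conjI allI impI)
      show "f \<in> topspace ?X \<rightarrow> topspace ?Y" using tX tY im by auto
    next
      fix U assume "openin ?Y U"
      then obtain Op where "openin (topology_generated_by SY) Op" "U = Op \<inter> B"
        by (auto simp: openin_subtopology)
      then have "generate_topology_on SY Op" "U = Op \<inter> B" by (auto simp: openin_topology_generated_by_iff)
      moreover have "{x \<in> topspace ?X. f x \<in> Op \<inter> B} = {p \<in> A. f p \<in> Op}" using tX im by auto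
      ultimately show "openin ?X {x \<in> topspace ?X. f x \<in> U}" using c1 by auto
    qed
  next
    show "open_map ?X ?Y f" unfolding open_map_def
    proof (intro allI impI)
      fix U assume "openin ?X U"
      then obtain Op where "openin (topology_generated_by SX) Op" "U = Op \<inter> A"
        by (auto simp: openin_subtopology)
      then show "openin ?Y (f ` U)" using c2 by (auto simp: openin_topology_generated_by_iff)
    qed
  qed (use tX tY im inj in auto)
qed

definition sh :: "('a, 'q) pgraph \<Rightarrow> 'a \<Rightarrow> 'a set \<Rightarrow> 'a set" where
  "sh L a w = {n \<in> Mor L. src L a = rng L n \<and> cmp L a n \<in> w}"

lemma alg1: fixes A B A' B' m n :: "'q::group_add" assumes "A + m = A' + n" "A - B = A' - B'" shows "B + m = B' + n"
proof -
  have "B + m = (-(A - B)) + (A + m)" by (simp only: minus_diff_eq add.assoc[symmetric] diff_add_cancel)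
  also have "\<dots> = (-(A' - B')) + (A' + n)" using assms by (simp only:)
  also have "\<dots> = B' + n" by (simp only: minus_diff_eq add.assoc[symmetric] diff_add_cancel)
  finally show ?thesis .
qed
lemma alg2: fixes A B A' B' g g' :: "'q::group_add" assumes "A + g = A' + g'" "B + g = B' + g'" shows "A - B = A' - B'"
proof -
  have "A - B = (A + g) - (B + g)" by (simp only: diff_conv_add_uminus minus_add add.assoc add_minus_cancel)
  also have "\<dots> = (A' + g') - (B' + g')" using assms by (simp only:)
  also have "\<dots> = A' - B'" by (simp only: diff_conv_add_uminus minus_add add.assoc add_minus_cancel)
  finally show ?thesis .
qed
lemma alg3: fixes a b g h x e :: "'q::group_add" assumes "b + x = g + e" shows "(a + x) - (h + e) = (a - b) + (g - h)"
proof -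
  have "x = -b + (b + x)" by (simp only: minus_add_cancel)
  then have x: "x = -b + (g + e)" using assms by (simp only:)
  show ?thesis unfolding x by (simp only: diff_conv_add_uminus minus_add add.assoc add_minus_cancel)
qed

definition Wset :: "'q::group_add set \<Rightarrow> ('a, 'q) pgraph \<Rightarrow> 'q \<Rightarrow> 'q \<Rightarrow> 'a set set \<Rightarrow> 'a set set \<Rightarrow> ('a set \<times> 'q \<times> 'a set) set" where
  "Wset P' L' m n U V = {(x, m - n, y) | x y. (x, m - n, y) \<in> pg_set P' L' \<and> x \<in> U \<and> y \<in> V \<and>
                          in_dom L' x m \<and> in_dom L' y n \<and> fshift L' x m = fshift L' y n}"

definition Sset :: "('a, 'q) pgraph \<Rightarrow> 'a \<Rightarrow> 'a \<Rightarrow> 'a set set \<Rightarrow> ('a \<times> 'a \<times> 'a set) set set" where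
  "Sset L' a b B = {spi_cls L' a b x | x. x \<in> B \<and> (a, b, x) \<in> spi_tri L'}"

definition Ft :: "('a, 'q::group_add) pgraph \<Rightarrow> ('a \<times> 'a \<times> 'a set) \<Rightarrow> ('a set \<times> 'q \<times> 'a set)" where
  "Ft L t = (case t of (a, b, x) \<Rightarrow> (fcat L a x, deg L a - deg L b, fcat L b x))"

definition fmap :: "('a, 'q::group_add) pgraph \<Rightarrow> ('a \<times> 'a \<times> 'a set) set \<Rightarrow> ('a set \<times> 'q \<times> 'a set)" where
  "fmap L c = Ft L (SOME t. t \<in> spi_tri L \<and> c = spi_rel L `` {t})"

lemma Ft_simp: "Ft L (a, b, x) = (fcat L a x, deg L a - deg L b, fcat L b x)"
  unfolding Ft_def by simp

lemma ex1_eq: "\<exists>!x. Q x \<Longrightarrow> Q a \<Longrightarrow> Q b \<Longrightarrow> a = b" by blast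

locale PG =
  fixes P :: "'q::group_add set" and L :: "('a, 'q) pgraph"
  assumes wq: "wqlo P" and pg: "is_pgraph P L" and fa: "finitely_aligned L"
begin

lemma obj_mor: "v \<in> Obj L \<Longrightarrow> v \<in> Mor L" using pg by (auto simp: is_pgraph_def)
lemma rng_obj: "l \<in> Mor L \<Longrightarrow> rng L l \<in> Obj L" using pg by (auto simp: is_pgraph_def)
lemma src_obj: "l \<in> Mor L \<Longrightarrow> src L l \<in> Obj L" using pg by (auto simp: is_pgraph_def)
lemma rng_mor: "l \<in> Mor L \<Longrightarrow> rng L l \<in> Mor L" using obj_mor rng_obj by blast
lemma src_mor: "l \<in> Mor L \<Longrightarrow> src L l \<in> Mor L" using obj_mor src_obj by blast
lemma obj_rng: "v \<in> Obj L \<Longrightarrow> rng L v = v" using pg by (auto simp: is_pgraph_def)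
lemma obj_src: "v \<in> Obj L \<Longrightarrow> src L v = v" using pg by (auto simp: is_pgraph_def)
lemma rng_rng[simp]: "l \<in> Mor L \<Longrightarrow> rng L (rng L l) = rng L l" using obj_rng rng_obj by blast
lemma src_rng[simp]: "l \<in> Mor L \<Longrightarrow> src L (rng L l) = rng L l" using obj_src rng_obj by blast
lemma rng_src[simp]: "l \<in> Mor L \<Longrightarrow> rng L (src L l) = src L l" using obj_rng src_obj by blast
lemma src_src[simp]: "l \<in> Mor L \<Longrightarrow> src L (src L l) = src L l" using obj_src src_obj by blast
lemma cmp_rng[simp]: "l \<in> Mor L \<Longrightarrow> cmp L (rng L l) l = l" using pg by (auto simp: is_pgraph_def)
lemma cmp_src[simp]: "l \<in> Mor L \<Longrightarrow> cmp L l (src L l) = l" using pg by (auto simp: is_pgraph_def)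
lemma cmp_mor: "l \<in> Mor L \<Longrightarrow> m \<in> Mor L \<Longrightarrow> src L l = rng L m \<Longrightarrow> cmp L l m \<in> Mor L"
  using pg by (auto simp: is_pgraph_def)
lemma rng_cmp[simp]: "l \<in> Mor L \<Longrightarrow> m \<in> Mor L \<Longrightarrow> src L l = rng L m \<Longrightarrow> rng L (cmp L l m) = rng L l"
  using pg by (auto simp: is_pgraph_def)
lemma src_cmp[simp]: "l \<in> Mor L \<Longrightarrow> m \<in> Mor L \<Longrightarrow> src L l = rng L m \<Longrightarrow> src L (cmp L l m) = src L m"
  using pg by (auto simp: is_pgraph_def)
lemma assoc: "l \<in> Mor L \<Longrightarrow> m \<in> Mor L \<Longrightarrow> n \<in> Mor L \<Longrightarrow> src L l = rng L m \<Longrightarrow> src L m = rng L n \<Longrightarrow>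
   cmp L (cmp L l m) n = cmp L l (cmp L m n)"
  using pg unfolding is_pgraph_def by blast
lemma deg_P: "l \<in> Mor L \<Longrightarrow> deg L l \<in> P" using pg by (auto simp: is_pgraph_def)
lemma deg_cmp: "l \<in> Mor L \<Longrightarrow> m \<in> Mor L \<Longrightarrow> src L l = rng L m \<Longrightarrow> deg L (cmp L l m) = deg L l + deg L m"
  using pg by (auto simp: is_pgraph_def)
lemma fact_ex1: "l \<in> Mor L \<Longrightarrow> p \<in> P \<Longrightarrow> q \<in> P \<Longrightarrow> deg L l = p + q \<Longrightarrow>
   (\<exists>!(m, n). m \<in> Mor L \<and> n \<in> Mor L \<and> src L m = rng L n \<and> cmp L m n = l \<and> deg L m = p \<and> deg L n = q)"
  using pg unfolding is_pgraph_def by blast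

lemma deg_obj: "v \<in> Obj L \<Longrightarrow> deg L v = 0"
proof -
  assume v: "v \<in> Obj L"
  have vM: "v \<in> Mor L" using v obj_mor by blast
  have sr: "src L v = rng L v" using v obj_src obj_rng by simp
  have "cmp L v v = v" using cmp_src[OF vM] obj_src[OF v] by simp
  moreover have "deg L (cmp L v v) = deg L v + deg L v" using deg_cmp[OF vM vM sr] .
  ultimately have "deg L v + 0 = deg L v + deg L v" by simp
  then show ?thesis using add_left_cancel by metis
qed

lemma fact_unique:
  assumes "m \<in> Mor L" "n \<in> Mor L" "m' \<in> Mor L" "n' \<in> Mor L" "src L m = rng L n" "src L m' = rng L n'"
    "cmp L m n = cmp L m' n'" "deg L m = deg L m'"
  shows "m = m' \<and> n = n'"
proof -
  let ?l = "cmp L m n"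
  have l: "?l \<in> Mor L" using assms cmp_mor by blast
  have d: "deg L ?l = deg L m + deg L n" using assms deg_cmp by blast
  have "deg L ?l = deg L m' + deg L n'" using assms(3,4,6,7) deg_cmp by simp
  then have dn: "deg L n' = deg L n" using d assms(8) by simp
  have ex: "\<exists>!(a, b). a \<in> Mor L \<and> b \<in> Mor L \<and> src L a = rng L b \<and> cmp L a b = ?l \<and> deg L a = deg L m \<and> deg L b = deg L n"
    using fact_ex1[OF l deg_P deg_P d] assms by blast
  have "(m, n) = (m', n')"
    apply (rule ex1_eq[OF ex])
    using assms dn by auto
  then show ?thesis by simp
qed

lemma cancel: "a \<in> Mor L \<Longrightarrow> m \<in> Mor L \<Longrightarrow> n \<in> Mor L \<Longrightarrow> src L a = rng L m \<Longrightarrow> src L a = rng L n \<Longrightarrow>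
   cmp L a m = cmp L a n \<Longrightarrow> m = n"
  using fact_unique[of a m a n] by auto

lemma deg0_obj: assumes "n \<in> Mor L" "deg L n = 0" shows "rng L n = n"
proof -
  have a: "rng L n \<in> Mor L" "src L n \<in> Mor L" using assms rng_mor src_mor by auto
  have b: "src L (rng L n) = rng L n" "src L n = rng L (src L n)" using assms by auto
  have c: "cmp L (rng L n) n = cmp L n (src L n)" using assms by simp
  have d: "deg L (rng L n) = deg L n" using assms deg_obj rng_obj by simp
  have "rng L n = n \<and> n = src L n"
    by (rule fact_unique[OF a(1) assms(1) assms(1) a(2) b c d])
  then show ?thesis by simp
qed


lemma pre_iff: "pre L m l \<longleftrightarrow> m \<in> Mor L \<and> (\<exists>n\<in>Mor L. src L m = rng L n \<and> l = cmp L m n)"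
  unfolding pre_def ext_def by auto

lemma pre_mor: assumes "pre L m l" shows "m \<in> Mor L \<and> l \<in> Mor L"
proof -
  obtain n where n: "n \<in> Mor L" "src L m = rng L n" "l = cmp L m n" "m \<in> Mor L" using assms pre_iff by blast
  have "cmp L m n \<in> Mor L" by (rule cmp_mor[OF n(4) n(1) n(2)])
  then show ?thesis using n by simp
qed

lemma pre_refl: assumes "l \<in> Mor L" shows "pre L l l"
proof -
  have "src L l \<in> Mor L" "src L l = rng L (src L l)" "l = cmp L l (src L l)"
    using src_mor[OF assms] rng_src[OF assms] cmp_src[OF assms] by auto
  then show ?thesis unfolding pre_iff using assms by blast
qed

lemma pre_cmp: "a \<in> Mor L \<Longrightarrow> n \<in> Mor L \<Longrightarrow> src L a = rng L n \<Longrightarrow> pre L a (cmp L a n)"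
  unfolding pre_iff by blast

lemma pre_trans: assumes "pre L a b" "pre L b c" shows "pre L a c"
proof -
  obtain n where n: "n \<in> Mor L" "src L a = rng L n" "b = cmp L a n" "a \<in> Mor L" using assms(1) pre_iff by blast
  obtain k where k: "k \<in> Mor L" "src L b = rng L k" "c = cmp L b k" using assms(2) pre_iff by blast
  have sk: "src L n = rng L k" using k(2) n src_cmp[OF n(4) n(1) n(2)] by simp
  have "c = cmp L (cmp L a n) k" using k(3) n(3) by simp
  also have "\<dots> = cmp L a (cmp L n k)" by (rule assoc[OF n(4) n(1) k(1) n(2) sk])
  finally have c: "c = cmp L a (cmp L n k)" .
  have "cmp L n k \<in> Mor L" by (rule cmp_mor[OF n(1) k(1) sk])
  moreover have "rng L (cmp L n k) = src L a" using rng_cmp[OF n(1) k(1) sk] n(2) by simp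
  ultimately show ?thesis unfolding pre_iff using n(4) c by metis
qed

lemma pre_rng: "pre L m l \<Longrightarrow> rng L l = rng L m"
  unfolding pre_iff by auto

lemma rng_pre: assumes "l \<in> Mor L" shows "pre L (rng L l) l"
proof -
  have "rng L l \<in> Mor L" "src L (rng L l) = rng L l" "l = cmp L (rng L l) l"
    using rng_mor[OF assms] src_rng[OF assms] cmp_rng[OF assms] by auto
  then show ?thesis unfolding pre_iff using assms by blast
qed

lemma pre_cmp_mono: assumes "pre L g k" "a \<in> Mor L" "src L a = rng L g" shows "pre L (cmp L a g) (cmp L a k)"
proof -
  obtain n where n: "n \<in> Mor L" "src L g = rng L n" "k = cmp L g n" "g \<in> Mor L" using assms(1) pre_iff by blast
  have "cmp L a k = cmp L (cmp L a g) n" using assoc[OF assms(2) n(4) n(1) assms(3) n(2)] n(3) by simp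
  moreover have "cmp L a g \<in> Mor L" by (rule cmp_mor[OF assms(2) n(4) assms(3)])
  moreover have "src L (cmp L a g) = rng L n" using src_cmp[OF assms(2) n(4) assms(3)] n(2) by simp
  ultimately show ?thesis unfolding pre_iff using n(1) by metis
qed

lemma pre_cancel: assumes "a \<in> Mor L" "n \<in> Mor L" "g \<in> Mor L" "src L a = rng L n" "src L a = rng L g"
   "pre L (cmp L a n) (cmp L a g)" shows "pre L n g"
proof -
  obtain k where k: "k \<in> Mor L" "src L (cmp L a n) = rng L k" "cmp L a g = cmp L (cmp L a n) k"
    using assms(6) pre_iff by blast
  have k2: "src L n = rng L k" using k(2) src_cmp[OF assms(1) assms(2) assms(4)] by simp
  have "cmp L a g = cmp L a (cmp L n k)" using assoc[OF assms(1) assms(2) k(1) assms(4) k2] k(3) by simp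
  moreover have "cmp L n k \<in> Mor L" by (rule cmp_mor[OF assms(2) k(1) k2])
  moreover have "src L a = rng L (cmp L n k)" using rng_cmp[OF assms(2) k(1) k2] assms(4) by simp
  ultimately have "g = cmp L n k" using cancel[OF assms(1) assms(3) _ assms(5)] by blast
  then show ?thesis unfolding pre_iff using assms(2) k(1) k2 by blast
qed

lemma pre_same_deg: assumes "pre L m l" "deg L m = deg L l" shows "m = l"
proof -
  obtain n where n: "n \<in> Mor L" "src L m = rng L n" "l = cmp L m n" "m \<in> Mor L" using assms(1) pre_iff by blast
  have "deg L l = deg L m + deg L n" using deg_cmp[OF n(4) n(1) n(2)] n(3) by simp
  then have "deg L m + deg L n = deg L m + 0" using assms(2) by simp
  then have "deg L n = 0" using add_left_cancel by blast
  then have "n = src L m" using deg0_obj[OF n(1)] n(2) by simp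
  then have "l = cmp L m (src L m)" using n by simp
  then show ?thesis using cmp_src[OF n(4)] by simp
qed

lemma filt_mor: "is_filter L x \<Longrightarrow> l \<in> x \<Longrightarrow> l \<in> Mor L" unfolding is_filter_def by blast
lemma filt_her: "is_filter L x \<Longrightarrow> l \<in> x \<Longrightarrow> pre L m l \<Longrightarrow> m \<in> x" unfolding is_filter_def by blast
lemma filt_dir: "is_filter L x \<Longrightarrow> l \<in> x \<Longrightarrow> m \<in> x \<Longrightarrow> \<exists>k\<in>x. pre L l k \<and> pre L m k"
  unfolding is_filter_def by blast
lemma filt_ne: "is_filter L x \<Longrightarrow> \<exists>l. l \<in> x" unfolding is_filter_def by blast

lemma filt_rng: assumes "is_filter L x" "l \<in> x" "m \<in> x" shows "rng L l = rng L m"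
proof -
  obtain k where k: "k \<in> x" "pre L l k" "pre L m k" using filt_dir assms by blast
  show ?thesis using pre_rng[OF k(2)] pre_rng[OF k(3)] by simp
qed

lemma frng: assumes "is_filter L x" shows "frng L x \<in> Obj L" "frng L x \<in> x" "\<And>l. l \<in> x \<Longrightarrow> rng L l = frng L x"
proof -
  obtain l where l: "l \<in> x" using filt_ne assms by blast
  have lM: "l \<in> Mor L" using filt_mor assms l by blast
  have r: "rng L l \<in> x" using filt_her[OF assms l rng_pre[OF lM]] .
  have ro: "rng L l \<in> Obj L" using rng_obj lM by blast
  have u: "v = rng L l" if "v \<in> Obj L" "v \<in> x" for v
    using filt_rng[OF assms that(2) l] obj_rng[OF that(1)] by simp
  have "frng L x = rng L l" unfolding frng_def
  proof (rule the_equality)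
    show "rng L l \<in> Obj L \<and> rng L l \<in> x" using r ro by blast
    show "v = rng L l" if "v \<in> Obj L \<and> v \<in> x" for v using u that by blast
  qed
  then show "frng L x \<in> Obj L" "frng L x \<in> x" using r ro by auto
  show "rng L m = frng L x" if "m \<in> x" for m
    using filt_rng[OF assms that l] \<open>frng L x = rng L l\<close> by simp
qed

lemma frng_eq: "is_filter L x \<Longrightarrow> v \<in> Obj L \<Longrightarrow> v \<in> x \<Longrightarrow> frng L x = v"
  using frng(3)[of x v] obj_rng[of v] by simp

lemma filt_deg: assumes "is_filter L x" "l \<in> x" "m \<in> x" "deg L l = deg L m" shows "l = m"
proof -
  obtain k where k: "k \<in> x" "pre L l k" "pre L m k" using filt_dir assms by blast
  from k(2) obtain n where n: "n \<in> Mor L" "src L l = rng L n" "k = cmp L l n" "l \<in> Mor L"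
    unfolding pre_iff by blast
  from k(3) obtain n' where n': "n' \<in> Mor L" "src L m = rng L n'" "k = cmp L m n'" "m \<in> Mor L"
    unfolding pre_iff by blast
  have e: "cmp L l n = cmp L m n'" by (simp only: n(3)[symmetric] n'(3)[symmetric])
  show ?thesis using fact_unique[OF n(4) n(1) n'(4) n'(1) n(2) n'(2) e assms(4)] by blast
qed

lemma seg_eq: assumes "is_filter L x" "l \<in> x" shows "seg L x (deg L l) = l"
  unfolding seg_def
proof (rule the_equality)
  show "l \<in> x \<and> deg L l = deg L l" using assms by simp
  show "m = l" if "m \<in> x \<and> deg L m = deg L l" for m
    using filt_deg[OF assms(1) _ assms(2)] that by blast
qed

lemma seg_in: assumes "is_filter L x" "in_dom L x m" shows "seg L x m \<in> x \<and> deg L (seg L x m) = m"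
proof -
  obtain l where l: "l \<in> x" "deg L l = m" using assms(2) unfolding in_dom_def by blast
  have "seg L x m = l" using seg_eq[OF assms(1) l(1)] unfolding l(2) .
  then show ?thesis using l by blast
qed


lemma fcat_mem: "z \<in> fcat L a y \<longleftrightarrow> (\<exists>g\<in>y. src L a = rng L g \<and> pre L z (cmp L a g))"
  unfolding fcat_def by simp

lemma sh_mem: "n \<in> sh L a w \<longleftrightarrow> n \<in> Mor L \<and> src L a = rng L n \<and> cmp L a n \<in> w"
  unfolding sh_def by simp

lemma fcat_in: assumes "is_filter L y" "a \<in> Mor L" "src L a = frng L y" "g \<in> y"
  shows "cmp L a g \<in> fcat L a y"
proof -
  have gM: "g \<in> Mor L" using filt_mor assms by blast
  have r: "src L a = rng L g" using frng(3)[OF assms(1) assms(4)] assms(3) by simp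
  have "pre L (cmp L a g) (cmp L a g)" using pre_refl cmp_mor[OF assms(2) gM r] by blast
  then show ?thesis unfolding fcat_mem using assms(4) r by blast
qed

lemma a_in_fcat: assumes "is_filter L y" "a \<in> Mor L" "src L a = frng L y"
  shows "a \<in> fcat L a y"
proof -
  have "cmp L a (frng L y) \<in> fcat L a y" using fcat_in[OF assms frng(2)[OF assms(1)]] .
  moreover have "cmp L a (frng L y) = a" using cmp_src[OF assms(2)] assms(3) by simp
  ultimately show ?thesis by simp
qed

lemma fcat_filter: assumes "is_filter L y" "a \<in> Mor L" "src L a = frng L y"
  shows "is_filter L (fcat L a y)"
  unfolding is_filter_def
proof (intro conjI ballI allI impI)
  show "fcat L a y \<subseteq> Mor L" unfolding fcat_def using pre_mor by blast
  show "fcat L a y \<noteq> {}" using a_in_fcat[OF assms] by blast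
next
  fix l m assume l: "l \<in> fcat L a y" and m: "pre L m l"
  then obtain g where "g \<in> y" "src L a = rng L g" "pre L l (cmp L a g)" unfolding fcat_mem by blast
  then show "m \<in> fcat L a y" unfolding fcat_mem using pre_trans[OF m] by blast
next
  fix l m assume l: "l \<in> fcat L a y" and m: "m \<in> fcat L a y"
  obtain g1 where g1: "g1 \<in> y" "src L a = rng L g1" "pre L l (cmp L a g1)" using l unfolding fcat_mem by blast
  obtain g2 where g2: "g2 \<in> y" "src L a = rng L g2" "pre L m (cmp L a g2)" using m unfolding fcat_mem by blast
  obtain k where k: "k \<in> y" "pre L g1 k" "pre L g2 k" using filt_dir[OF assms(1) g1(1) g2(1)] by blast
  have ak: "cmp L a k \<in> fcat L a y" using fcat_in[OF assms k(1)] .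
  have "pre L (cmp L a g1) (cmp L a k)" using pre_cmp_mono[OF k(2) assms(2) g1(2)] .
  then have 1: "pre L l (cmp L a k)" using pre_trans g1(3) by blast
  have "pre L (cmp L a g2) (cmp L a k)" using pre_cmp_mono[OF k(3) assms(2) g2(2)] .
  then have 2: "pre L m (cmp L a k)" using pre_trans g2(3) by blast
  show "\<exists>k\<in>fcat L a y. pre L l k \<and> pre L m k" using ak 1 2 by blast
qed

lemma fcat_frng: assumes "is_filter L y" "a \<in> Mor L" "src L a = frng L y"
  shows "frng L (fcat L a y) = rng L a"
  using frng(3)[OF fcat_filter[OF assms] a_in_fcat[OF assms]] by simp

lemma sh_fcat: assumes "is_filter L y" "a \<in> Mor L" "src L a = frng L y"
  shows "sh L a (fcat L a y) = y"
proof
  show "sh L a (fcat L a y) \<subseteq> y"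
  proof
    fix n assume "n \<in> sh L a (fcat L a y)"
    then have n: "n \<in> Mor L" "src L a = rng L n" "cmp L a n \<in> fcat L a y" unfolding sh_mem by auto
    then obtain g where g: "g \<in> y" "src L a = rng L g" "pre L (cmp L a n) (cmp L a g)" unfolding fcat_mem by blast
    have "pre L n g" using pre_cancel[OF assms(2) n(1) filt_mor[OF assms(1) g(1)] n(2) g(2) g(3)] .
    then show "n \<in> y" using filt_her[OF assms(1) g(1)] by blast
  qed
  show "y \<subseteq> sh L a (fcat L a y)"
  proof
    fix n assume n: "n \<in> y"
    have "src L a = rng L n" using frng(3)[OF assms(1) n] assms(3) by simp
    then show "n \<in> sh L a (fcat L a y)" unfolding sh_mem using fcat_in[OF assms n] filt_mor[OF assms(1) n] by blast
  qed
qed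

lemma sh_filter: assumes "is_filter L w" "a \<in> w"
  shows "is_filter L (sh L a w)" "frng L (sh L a w) = src L a"
proof -
  have aM: "a \<in> Mor L" using filt_mor assms by blast
  have s_in: "src L a \<in> sh L a w" unfolding sh_mem using src_mor[OF aM] rng_src[OF aM] cmp_src[OF aM] assms(2) by simp
  show f: "is_filter L (sh L a w)"
    unfolding is_filter_def
  proof (intro conjI ballI allI impI)
    show "sh L a w \<subseteq> Mor L" unfolding sh_def by blast
    show "sh L a w \<noteq> {}" using s_in by blast
  next
    fix l m assume l: "l \<in> sh L a w" and m: "pre L m l"
    have l': "l \<in> Mor L" "src L a = rng L l" "cmp L a l \<in> w" using l unfolding sh_mem by auto
    have r: "src L a = rng L m" using pre_rng[OF m] l'(2) by simp
    have "pre L (cmp L a m) (cmp L a l)" using pre_cmp_mono[OF m aM r] .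
    then have "cmp L a m \<in> w" using filt_her[OF assms(1) l'(3)] by blast
    then show "m \<in> sh L a w" unfolding sh_mem using pre_mor[OF m] r by blast
  next
    fix n1 n2 assume n1: "n1 \<in> sh L a w" and n2: "n2 \<in> sh L a w"
    have a1: "n1 \<in> Mor L" "src L a = rng L n1" "cmp L a n1 \<in> w" using n1 unfolding sh_mem by auto
    have a2: "n2 \<in> Mor L" "src L a = rng L n2" "cmp L a n2 \<in> w" using n2 unfolding sh_mem by auto
    obtain k where k: "k \<in> w" "pre L (cmp L a n1) k" "pre L (cmp L a n2) k" using filt_dir[OF assms(1) a1(3) a2(3)] by blast
    obtain k1 where k1: "k1 \<in> Mor L" "src L (cmp L a n1) = rng L k1" "k = cmp L (cmp L a n1) k1"
      using k(2) pre_iff by blast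
    obtain k2 where k2: "k2 \<in> Mor L" "src L (cmp L a n2) = rng L k2" "k = cmp L (cmp L a n2) k2"
      using k(3) pre_iff by blast
    have s1: "src L n1 = rng L k1" using k1(2) src_cmp[OF aM a1(1) a1(2)] by simp
    have s2: "src L n2 = rng L k2" using k2(2) src_cmp[OF aM a2(1) a2(2)] by simp
    have e1: "k = cmp L a (cmp L n1 k1)" using assoc[OF aM a1(1) k1(1) a1(2) s1] k1(3) by simp
    have e2: "k = cmp L a (cmp L n2 k2)" using assoc[OF aM a2(1) k2(1) a2(2) s2] k2(3) by simp
    have c1: "cmp L n1 k1 \<in> Mor L" by (rule cmp_mor[OF a1(1) k1(1) s1])
    have c2: "cmp L n2 k2 \<in> Mor L" by (rule cmp_mor[OF a2(1) k2(1) s2])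
    have r1: "src L a = rng L (cmp L n1 k1)" using rng_cmp[OF a1(1) k1(1) s1] a1(2) by simp
    have r2: "src L a = rng L (cmp L n2 k2)" using rng_cmp[OF a2(1) k2(1) s2] a2(2) by simp
    have eq: "cmp L n1 k1 = cmp L n2 k2" using cancel[OF aM c1 c2 r1 r2] e1 e2 by simp
    have "cmp L n1 k1 \<in> sh L a w" unfolding sh_mem using c1 r1 e1 k(1) by simp
    moreover have "pre L n1 (cmp L n1 k1)" by (rule pre_cmp[OF a1(1) k1(1) s1])
    moreover have "pre L n2 (cmp L n1 k1)" using pre_cmp[OF a2(1) k2(1) s2] eq by simp
    ultimately show "\<exists>k\<in>sh L a w. pre L n1 k \<and> pre L n2 k" by blast
  qed
  show "frng L (sh L a w) = src L a" using frng_eq[OF f src_obj[OF aM] s_in] .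
qed

lemma fcat_sh: assumes "is_filter L w" "a \<in> w"
  shows "fcat L a (sh L a w) = w"
proof
  have aM: "a \<in> Mor L" using filt_mor assms by blast
  show "fcat L a (sh L a w) \<subseteq> w"
  proof
    fix z assume "z \<in> fcat L a (sh L a w)"
    then obtain g where g: "g \<in> sh L a w" "pre L z (cmp L a g)" unfolding fcat_mem by blast
    then show "z \<in> w" using filt_her[OF assms(1)] unfolding sh_mem by blast
  qed
  show "w \<subseteq> fcat L a (sh L a w)"
  proof
    fix z assume z: "z \<in> w"
    obtain k where k: "k \<in> w" "pre L a k" "pre L z k" using filt_dir[OF assms(1) assms(2) z] by blast
    obtain n where n: "n \<in> Mor L" "src L a = rng L n" "k = cmp L a n" using k(2) pre_iff by blast
    have "n \<in> sh L a w" unfolding sh_mem using n k(1) by simp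
    then show "z \<in> fcat L a (sh L a w)" unfolding fcat_mem using n k(3) by blast
  qed
qed

lemma sh_sh: assumes "a \<in> Mor L" "u \<in> Mor L" "src L a = rng L u"
  shows "sh L u (sh L a w) = sh L (cmp L a u) w"
proof (intro set_eqI iffI)
  fix n assume "n \<in> sh L u (sh L a w)"
  then have n: "n \<in> Mor L" "src L u = rng L n" "cmp L u n \<in> Mor L" "src L a = rng L (cmp L u n)"
     "cmp L a (cmp L u n) \<in> w" unfolding sh_mem by auto
  have "cmp L (cmp L a u) n = cmp L a (cmp L u n)" by (rule assoc[OF assms(1,2) n(1) assms(3) n(2)])
  moreover have "src L (cmp L a u) = rng L n" using src_cmp[OF assms] n(2) by simp
  ultimately show "n \<in> sh L (cmp L a u) w" unfolding sh_mem using n by simp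
next
  fix n assume "n \<in> sh L (cmp L a u) w"
  then have n: "n \<in> Mor L" "src L (cmp L a u) = rng L n" "cmp L (cmp L a u) n \<in> w" unfolding sh_mem by auto
  have s: "src L u = rng L n" using n(2) src_cmp[OF assms] by simp
  have "cmp L (cmp L a u) n = cmp L a (cmp L u n)" by (rule assoc[OF assms(1,2) n(1) assms(3) s])
  moreover have "cmp L u n \<in> Mor L" by (rule cmp_mor[OF assms(2) n(1) s])
  moreover have "src L a = rng L (cmp L u n)" using rng_cmp[OF assms(2) n(1) s] assms(3) by simp
  ultimately show "n \<in> sh L u (sh L a w)" unfolding sh_mem using n s by simp
qed

lemma fcat_fcat: assumes "is_filter L y" "a \<in> Mor L" "g \<in> Mor L" "src L a = rng L g" "src L g = frng L y"
  shows "fcat L (cmp L a g) y = fcat L a (fcat L g y)"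
proof (intro set_eqI iffI)
  fix z assume "z \<in> fcat L (cmp L a g) y"
  then obtain c where c: "c \<in> y" "src L (cmp L a g) = rng L c" "pre L z (cmp L (cmp L a g) c)" unfolding fcat_mem by blast
  have cM: "c \<in> Mor L" using filt_mor assms(1) c(1) by blast
  have s: "src L g = rng L c" using c(2) src_cmp[OF assms(2,3,4)] by simp
  have "cmp L g c \<in> fcat L g y" using fcat_in[OF assms(1) assms(3) assms(5) c(1)] .
  moreover have "src L a = rng L (cmp L g c)" using rng_cmp[OF assms(3) cM s] assms(4) by simp
  moreover have "cmp L (cmp L a g) c = cmp L a (cmp L g c)" by (rule assoc[OF assms(2,3) cM assms(4) s])
  ultimately show "z \<in> fcat L a (fcat L g y)" unfolding fcat_mem[of z a] using c(3) by metis
next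
  fix z assume "z \<in> fcat L a (fcat L g y)"
  then obtain d where d: "d \<in> fcat L g y" "src L a = rng L d" "pre L z (cmp L a d)" unfolding fcat_mem[of z a] by blast
  from d(1) obtain c where c: "c \<in> y" "src L g = rng L c" "pre L d (cmp L g c)" unfolding fcat_mem by blast
  have cM: "c \<in> Mor L" using filt_mor assms(1) c(1) by blast
  have "pre L (cmp L a d) (cmp L a (cmp L g c))" using pre_cmp_mono[OF c(3) assms(2) d(2)] .
  moreover have "cmp L (cmp L a g) c = cmp L a (cmp L g c)" by (rule assoc[OF assms(2,3) cM assms(4) c(2)])
  ultimately have "pre L z (cmp L (cmp L a g) c)" using pre_trans d(3) by metis
  moreover have "src L (cmp L a g) = rng L c" using src_cmp[OF assms(2,3,4)] c(2) by simp
  ultimately show "z \<in> fcat L (cmp L a g) y" unfolding fcat_mem using c(1) by blast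
qed

lemma sh_obj: assumes "is_filter L x" shows "sh L (frng L x) x = x"
proof (intro set_eqI iffI)
  have v: "frng L x \<in> Obj L" using frng(1)[OF assms] .
  fix n
  { assume "n \<in> sh L (frng L x) x"
    then have "n \<in> Mor L" "frng L x = rng L n" "cmp L (frng L x) n \<in> x" unfolding sh_mem using obj_src[OF v] by auto
    then show "n \<in> x" using cmp_rng by metis }
  { assume n: "n \<in> x"
    have nM: "n \<in> Mor L" using filt_mor[OF assms n] .
    have r: "rng L n = frng L x" using frng(3)[OF assms n] .
    have "cmp L (frng L x) n = n" using cmp_rng[OF nM] r by simp
    then show "n \<in> sh L (frng L x) x" unfolding sh_mem using nM r n obj_src[OF v] by simp }
qed

lemma fcat_obj: assumes "is_filter L x" shows "fcat L (frng L x) x = x"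
  using fcat_sh[OF assms frng(2)[OF assms]] sh_obj[OF assms] by simp


section \<open>Common refinement\<close>

lemma refine:
  assumes y: "is_filter L y" and y': "is_filter L y'" and g: "g \<in> Mor L" and h: "h \<in> Mor L"
    and sg: "src L g = frng L y" and sh': "src L h = frng L y'" and eq: "fcat L g y = fcat L h y'"
  obtains z u v where "is_filter L z" "u \<in> Mor L" "v \<in> Mor L" "src L g = rng L u" "src L h = rng L v"
    "cmp L g u = cmp L h v" "src L u = frng L z" "src L v = frng L z" "y = fcat L u z" "y' = fcat L v z"
proof -
  define X where "X = fcat L g y"
  have fx: "is_filter L X" using fcat_filter[OF y g sg] X_def by simp
  have gx: "g \<in> X" using a_in_fcat[OF y g sg] X_def by simp
  have hx: "h \<in> X" using a_in_fcat[OF y' h sh'] eq X_def by simp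
  obtain k where k: "k \<in> X" "pre L g k" "pre L h k" using filt_dir[OF fx gx hx] by blast
  obtain u where u: "u \<in> Mor L" "src L g = rng L u" "k = cmp L g u" using k(2) pre_iff by blast
  obtain v where v: "v \<in> Mor L" "src L h = rng L v" "k = cmp L h v" using k(3) pre_iff by blast
  define z where "z = sh L k X"
  have fz: "is_filter L z" using sh_filter(1)[OF fx k(1)] z_def by simp
  have rz: "frng L z = src L k" using sh_filter(2)[OF fx k(1)] z_def by simp
  have su: "src L u = frng L z" using rz u(3) src_cmp[OF g u(1) u(2)] by simp
  have sv: "src L v = frng L z" using rz v(3) src_cmp[OF h v(1) v(2)] by simp
  have yx: "y = sh L g X" using sh_fcat[OF y g sg] X_def by simp
  have y'x: "y' = sh L h X" using sh_fcat[OF y' h sh'] eq X_def by simp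
  have "u \<in> sh L g X" unfolding sh_mem using u k(1) by simp
  then have uy: "u \<in> y" using yx by simp
  have "v \<in> sh L h X" unfolding sh_mem using v k(1) by simp
  then have vy: "v \<in> y'" using y'x by simp
  have "sh L u (sh L g X) = z" unfolding z_def using sh_sh[OF g u(1) u(2)] u(3) by simp
  then have "sh L u y = z" using yx by simp
  then have 1: "y = fcat L u z" using fcat_sh[OF y uy] by simp
  have "sh L v (sh L h X) = z" unfolding z_def using sh_sh[OF h v(1) v(2)] v(3) by simp
  then have "sh L v y' = z" using y'x by simp
  then have 2: "y' = fcat L v z" using fcat_sh[OF y' vy] by simp
  have e: "cmp L g u = cmp L h v" using u(3) v(3) by simp
  show ?thesis by (rule that[OF fz u(1) v(1) u(2) v(2) e su sv 1 2])
qed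

section \<open>Spielberg triples and the relation\<close>

lemma tri_mem: "(a, b, x) \<in> spi_tri L \<longleftrightarrow> a \<in> Mor L \<and> b \<in> Mor L \<and> is_filter L x \<and> src L a = frng L x \<and> src L b = frng L x"
  unfolding spi_tri_def filters_def by simp

lemma rel_mem: "((a, b, x), (a', b', x')) \<in> spi_rel L \<longleftrightarrow>
     (a, b, x) \<in> spi_tri L \<and> (a', b', x') \<in> spi_tri L \<and>
     (\<exists>y\<in>filters L. \<exists>g\<in>Mor L. \<exists>g'\<in>Mor L.
        src L g = frng L y \<and> src L g' = frng L y \<and>
        src L a = rng L g \<and> src L a' = rng L g' \<and>
        x = fcat L g y \<and> x' = fcat L g' y \<and>
        cmp L a g = cmp L a' g' \<and> cmp L b g = cmp L b' g')"
  unfolding spi_rel_def by simp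

lemma rel_intro:
  assumes "(a, b, x) \<in> spi_tri L" "(a', b', x') \<in> spi_tri L" "is_filter L y" "g \<in> Mor L" "g' \<in> Mor L"
    "src L g = frng L y" "src L g' = frng L y" "src L a = rng L g" "src L a' = rng L g'"
    "x = fcat L g y" "x' = fcat L g' y" "cmp L a g = cmp L a' g'" "cmp L b g = cmp L b' g'"
  shows "((a, b, x), (a', b', x')) \<in> spi_rel L"
proof -
  have yF: "y \<in> filters L" using assms(3) filters_def by blast
  show ?thesis unfolding rel_mem
    apply (rule conjI, rule assms(1), rule conjI, rule assms(2))
    apply (rule bexI[OF _ yF], rule bexI[OF _ assms(4)], rule bexI[OF _ assms(5)])
    using assms(6-13) by blast
qed

lemma rel_elim:
  assumes "((a, b, x), (a', b', x')) \<in> spi_rel L"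
  obtains y g g' where "(a, b, x) \<in> spi_tri L" "(a', b', x') \<in> spi_tri L" "is_filter L y" "g \<in> Mor L" "g' \<in> Mor L"
    "src L g = frng L y" "src L g' = frng L y" "src L a = rng L g" "src L a' = rng L g'"
    "x = fcat L g y" "x' = fcat L g' y" "cmp L a g = cmp L a' g'" "cmp L b g = cmp L b' g'"
proof -
  have t: "(a, b, x) \<in> spi_tri L" "(a', b', x') \<in> spi_tri L" using assms rel_mem by blast+
  obtain y g g' where A: "y \<in> filters L" "g \<in> Mor L" "g' \<in> Mor L" "src L g = frng L y" "src L g' = frng L y"
    "src L a = rng L g" "src L a' = rng L g'" "x = fcat L g y" "x' = fcat L g' y"
    "cmp L a g = cmp L a' g'" "cmp L b g = cmp L b' g'" using assms unfolding rel_mem by blast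
  have "is_filter L y" using A(1) filters_def by blast
  then show ?thesis using that[OF t(1) t(2) _ A(2) A(3) A(4) A(5) A(6) A(7) A(8) A(9) A(10) A(11)] by blast
qed

lemma rel_refl: assumes "t \<in> spi_tri L" shows "(t, t) \<in> spi_rel L"
proof -
  obtain a b x where t: "t = (a, b, x)" by (cases t) auto
  have m: "a \<in> Mor L" "b \<in> Mor L" "is_filter L x" "src L a = frng L x" "src L b = frng L x"
    using assms t tri_mem by auto
  have o: "frng L x \<in> Obj L" using frng(1)[OF m(3)] .
  have v: "frng L x \<in> Mor L" using obj_mor[OF o] .
  have "src L (frng L x) = frng L x" "src L a = rng L (frng L x)" using obj_src[OF o] obj_rng[OF o] m by auto
  moreover have "x = fcat L (frng L x) x" using fcat_obj[OF m(3)] by simp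
  moreover have "x \<in> filters L" using m(3) filters_def by blast
  ultimately show ?thesis unfolding t rel_mem using assms t v by blast
qed

lemma rel_sym3: assumes "((a, b, x), (a', b', x')) \<in> spi_rel L" shows "((a', b', x'), (a, b, x)) \<in> spi_rel L"
proof -
  obtain y g g' where A: "(a, b, x) \<in> spi_tri L" "(a', b', x') \<in> spi_tri L" "is_filter L y" "g \<in> Mor L" "g' \<in> Mor L"
    "src L g = frng L y" "src L g' = frng L y" "src L a = rng L g" "src L a' = rng L g'"
    "x = fcat L g y" "x' = fcat L g' y" "cmp L a g = cmp L a' g'" "cmp L b g = cmp L b' g'"
    using rel_elim[OF assms] by blast
  show ?thesis by (rule rel_intro[OF A(2) A(1) A(3) A(5) A(4) A(7) A(6) A(9) A(8) A(11) A(10) A(12)[symmetric] A(13)[symmetric]])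
qed

lemma rel_sym: "(s, t) \<in> spi_rel L \<Longrightarrow> (t, s) \<in> spi_rel L"
  using rel_sym3 by (cases s; cases t) blast

lemma rel_sub: "spi_rel L \<subseteq> spi_tri L \<times> spi_tri L"
proof
  fix p assume p: "p \<in> spi_rel L"
  obtain a b x a' b' x' where "p = ((a, b, x), (a', b', x'))" by (cases p) auto
  then show "p \<in> spi_tri L \<times> spi_tri L" using p rel_mem by blast
qed

lemma rel_trans: assumes 1: "((a, b, x), (a', b', x')) \<in> spi_rel L" and 2: "((a', b', x'), (a'', b'', x'')) \<in> spi_rel L"
  shows "((a, b, x), (a'', b'', x'')) \<in> spi_rel L"
proof -
  obtain y g g' where A0: "(a, b, x) \<in> spi_tri L" "(a', b', x') \<in> spi_tri L" "is_filter L y" and A: "y \<in> filters L" "g \<in> Mor L" "g' \<in> Mor L" "src L g = frng L y" "src L g' = frng L y"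
    "src L a = rng L g" "src L a' = rng L g'" "x = fcat L g y" "x' = fcat L g' y"
    "cmp L a g = cmp L a' g'" "cmp L b g = cmp L b' g'"
  proof (rule rel_elim[OF 1])
    fix y g g' assume "(a, b, x) \<in> spi_tri L" "(a', b', x') \<in> spi_tri L" "is_filter L y" "g \<in> Mor L" "g' \<in> Mor L"
    "src L g = frng L y" "src L g' = frng L y" "src L a = rng L g" "src L a' = rng L g'"
    "x = fcat L g y" "x' = fcat L g' y" "cmp L a g = cmp L a' g'" "cmp L b g = cmp L b' g'"
    moreover have "y \<in> filters L" using \<open>is_filter L y\<close> filters_def by blast
    ultimately show ?thesis using that by blast
  qed
  obtain y' h' h'' where B0: "(a'', b'', x'') \<in> spi_tri L" "is_filter L y'" and B: "y' \<in> filters L" "h' \<in> Mor L" "h'' \<in> Mor L" "src L h' = frng L y'" "src L h'' = frng L y'"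
    "src L a' = rng L h'" "src L a'' = rng L h''" "x' = fcat L h' y'" "x'' = fcat L h'' y'"
    "cmp L a' h' = cmp L a'' h''" "cmp L b' h' = cmp L b'' h''"
  proof (rule rel_elim[OF 2])
    fix y g g' assume "(a', b', x') \<in> spi_tri L" "(a'', b'', x'') \<in> spi_tri L" "is_filter L y" "g \<in> Mor L" "g' \<in> Mor L"
    "src L g = frng L y" "src L g' = frng L y" "src L a' = rng L g" "src L a'' = rng L g'"
    "x' = fcat L g y" "x'' = fcat L g' y" "cmp L a' g = cmp L a'' g'" "cmp L b' g = cmp L b'' g'"
    moreover have "y \<in> filters L" using \<open>is_filter L y\<close> filters_def by blast
    ultimately show ?thesis using that by blast
  qed
  have t1: "a \<in> Mor L" "b \<in> Mor L" "is_filter L x" "src L a = frng L x" "src L b = frng L x" using A0(1) tri_mem by blast+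
  have t2: "a' \<in> Mor L" "b' \<in> Mor L" "is_filter L x'" "src L a' = frng L x'" "src L b' = frng L x'" using A0(2) tri_mem by blast+
  have t3: "a'' \<in> Mor L" "b'' \<in> Mor L" "is_filter L x''" "src L a'' = frng L x''" "src L b'' = frng L x''" using B0(1) tri_mem by blast+
  have fy: "is_filter L y" by (rule A0(3))
  have fy': "is_filter L y'" by (rule B0(2))
  have eq: "fcat L g' y = fcat L h' y'" using A(9) B(8) by simp
  obtain z u v where C: "is_filter L z" "u \<in> Mor L" "v \<in> Mor L" "src L g' = rng L u" "src L h' = rng L v"
    "cmp L g' u = cmp L h' v" "src L u = frng L z" "src L v = frng L z" "y = fcat L u z" "y' = fcat L v z"
    by (rule refine[OF fy fy' A(3) B(2) A(5) B(4) eq])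
  have sgu: "src L g = rng L u" using A(4) A(5) C(4) by simp
  have sbg: "src L b = rng L g" using t1(5) A(8) fcat_frng[OF fy A(2) A(4)] by simp
  have sb'g': "src L b' = rng L g'" using t2(5) A(9) fcat_frng[OF fy A(3) A(5)] by simp
  have sb'h': "src L b' = rng L h'" using t2(5) B(8) fcat_frng[OF fy' B(2) B(4)] by simp
  have sb''h'': "src L b'' = rng L h''" using t3(5) B(9) fcat_frng[OF fy' B(3) B(5)] by simp
  have sh''v: "src L h'' = rng L v" using B(4) B(5) C(5) by simp
  define G where "G = cmp L g u"
  define H where "H = cmp L h'' v"
  have GM: "G \<in> Mor L" unfolding G_def by (rule cmp_mor[OF A(2) C(2) sgu])
  have HM: "H \<in> Mor L" unfolding H_def by (rule cmp_mor[OF B(3) C(3) sh''v])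
  have sG: "src L G = frng L z" unfolding G_def using src_cmp[OF A(2) C(2) sgu] C(7) by simp
  have sH: "src L H = frng L z" unfolding H_def using src_cmp[OF B(3) C(3) sh''v] C(8) by simp
  have rG: "src L a = rng L G" unfolding G_def using rng_cmp[OF A(2) C(2) sgu] A(6) by simp
  have rH: "src L a'' = rng L H" unfolding H_def using rng_cmp[OF B(3) C(3) sh''v] B(7) by simp
  have xG: "x = fcat L G z" unfolding G_def using A(8) C(9) fcat_fcat[OF C(1) A(2) C(2) sgu C(7)] by simp
  have xH: "x'' = fcat L H z" unfolding H_def using B(9) C(10) fcat_fcat[OF C(1) B(3) C(3) sh''v C(8)] by simp
  have "cmp L a G = cmp L (cmp L a g) u" unfolding G_def using assoc[OF t1(1) A(2) C(2) A(6) sgu] by simp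
  also have "\<dots> = cmp L (cmp L a' g') u" using A(10) by simp
  also have "\<dots> = cmp L a' (cmp L g' u)" using assoc[OF t2(1) A(3) C(2) A(7) C(4)] by simp
  also have "\<dots> = cmp L a' (cmp L h' v)" using C(6) by simp
  also have "\<dots> = cmp L (cmp L a' h') v" using assoc[OF t2(1) B(2) C(3) B(6) C(5)] by simp
  also have "\<dots> = cmp L (cmp L a'' h'') v" using B(10) by simp
  also have "\<dots> = cmp L a'' H" unfolding H_def using assoc[OF t3(1) B(3) C(3) B(7) sh''v] by simp
  finally have aa: "cmp L a G = cmp L a'' H" .
  have "cmp L b G = cmp L (cmp L b g) u" unfolding G_def using assoc[OF t1(2) A(2) C(2) sbg sgu] by simp
  also have "\<dots> = cmp L (cmp L b' g') u" using A(11) by simp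
  also have "\<dots> = cmp L b' (cmp L g' u)" using assoc[OF t2(2) A(3) C(2) sb'g' C(4)] by simp
  also have "\<dots> = cmp L b' (cmp L h' v)" using C(6) by simp
  also have "\<dots> = cmp L (cmp L b' h') v" using assoc[OF t2(2) B(2) C(3) sb'h' C(5)] by simp
  also have "\<dots> = cmp L (cmp L b'' h'') v" using B(11) by simp
  also have "\<dots> = cmp L b'' H" unfolding H_def using assoc[OF t3(2) B(3) C(3) sb''h'' sh''v] by simp
  finally have bb: "cmp L b G = cmp L b'' H" .
  show ?thesis by (rule rel_intro[OF A0(1) B0(1) C(1) GM HM sG sH rG rH xG xH aa bb])
qed

lemma rel_equiv: "equiv (spi_tri L) (spi_rel L)"
proof (rule equivI)
  show "spi_rel L \<subseteq> spi_tri L \<times> spi_tri L" by (rule rel_sub)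
  show "refl_on (spi_tri L) (spi_rel L)" unfolding refl_on_def
    using rel_refl rel_sub by blast
  show "sym (spi_rel L)" unfolding sym_def using rel_sym by blast
  show "trans (spi_rel L)" unfolding trans_def
  proof (intro allI impI)
    fix s t r assume "(s, t) \<in> spi_rel L" "(t, r) \<in> spi_rel L"
    then show "(s, r) \<in> spi_rel L" using rel_trans
      by (cases s; cases t; cases r) blast
  qed
qed


lemma fshift_sh: "fshift L w m = sh L (seg L w m) w"
  unfolding fshift_def sh_def by simp

lemma pg_mem: "(x, q, y) \<in> pg_set P L \<longleftrightarrow> x \<in> filters L \<and> y \<in> filters L \<and>
     (\<exists>m\<in>P. \<exists>n\<in>P. q = m - n \<and> in_dom L x m \<and> in_dom L y n \<and> fshift L x m = fshift L y n)"
  unfolding pg_set_def by simp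

lemma tri_frng: assumes "(a, b, x) \<in> spi_tri L" shows "frng L (fcat L a x) = rng L a" "frng L (fcat L b x) = rng L b"
  "is_filter L (fcat L a x)" "is_filter L (fcat L b x)" "a \<in> fcat L a x" "b \<in> fcat L b x"
  "sh L a (fcat L a x) = x" "sh L b (fcat L b x) = x"
proof -
  have t: "a \<in> Mor L" "b \<in> Mor L" "is_filter L x" "src L a = frng L x" "src L b = frng L x" using assms tri_mem by blast+
  show "frng L (fcat L a x) = rng L a" "frng L (fcat L b x) = rng L b"
    "is_filter L (fcat L a x)" "is_filter L (fcat L b x)" "a \<in> fcat L a x" "b \<in> fcat L b x"
    "sh L a (fcat L a x) = x" "sh L b (fcat L b x) = x"
    using fcat_frng[OF t(3) t(1) t(4)] fcat_frng[OF t(3) t(2) t(5)] fcat_filter[OF t(3) t(1) t(4)]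
      fcat_filter[OF t(3) t(2) t(5)] a_in_fcat[OF t(3) t(1) t(4)] a_in_fcat[OF t(3) t(2) t(5)]
      sh_fcat[OF t(3) t(1) t(4)] sh_fcat[OF t(3) t(2) t(5)] by auto
qed

lemma F_inv: assumes "((a, b, x), (a', b', x')) \<in> spi_rel L" shows "Ft L (a, b, x) = Ft L (a', b', x')"
proof -
  obtain y g g' where A: "(a, b, x) \<in> spi_tri L" "(a', b', x') \<in> spi_tri L" "is_filter L y" "g \<in> Mor L" "g' \<in> Mor L"
    "src L g = frng L y" "src L g' = frng L y" "src L a = rng L g" "src L a' = rng L g'"
    "x = fcat L g y" "x' = fcat L g' y" "cmp L a g = cmp L a' g'" "cmp L b g = cmp L b' g'"
    using rel_elim[OF assms] by blast
  have t1: "a \<in> Mor L" "b \<in> Mor L" "is_filter L x" "src L a = frng L x" "src L b = frng L x" using A(1) tri_mem by blast+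
  have t2: "a' \<in> Mor L" "b' \<in> Mor L" "is_filter L x'" "src L a' = frng L x'" "src L b' = frng L x'" using A(2) tri_mem by blast+
  have sb: "src L b = rng L g" using t1(5) A(10) fcat_frng[OF A(3) A(4) A(6)] by simp
  have sb': "src L b' = rng L g'" using t2(5) A(11) fcat_frng[OF A(3) A(5) A(7)] by simp
  have 1: "fcat L a x = fcat L a' x'"
    using fcat_fcat[OF A(3) t1(1) A(4) A(8) A(6)] fcat_fcat[OF A(3) t2(1) A(5) A(9) A(7)] A(10,11,12) by simp
  have 2: "fcat L b x = fcat L b' x'"
    using fcat_fcat[OF A(3) t1(2) A(4) sb A(6)] fcat_fcat[OF A(3) t2(2) A(5) sb' A(7)] A(10,11,13) by simp
  have da: "deg L a + deg L g = deg L a' + deg L g'" using deg_cmp[OF t1(1) A(4) A(8)] deg_cmp[OF t2(1) A(5) A(9)] A(12) by simp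
  have db: "deg L b + deg L g = deg L b' + deg L g'" using deg_cmp[OF t1(2) A(4) sb] deg_cmp[OF t2(2) A(5) sb'] A(13) by simp
  have 3: "deg L a - deg L b = deg L a' - deg L b'" using alg2[OF da db] .
  show ?thesis unfolding Ft_simp using 1 2 3 by simp
qed

lemma F_inv2: assumes "(s, t) \<in> spi_rel L" shows "Ft L s = Ft L t"
proof -
  obtain a b x where s: "s = (a, b, x)" by (cases s) auto
  obtain a' b' x' where t: "t = (a', b', x')" by (cases t) auto
  show ?thesis using F_inv assms unfolding s t by blast
qed

lemma F_in_pg: assumes "(a, b, x) \<in> spi_tri L" shows "Ft L (a, b, x) \<in> pg_set P L"
proof -
  have t: "a \<in> Mor L" "b \<in> Mor L" using assms tri_mem by blast+
  note T = tri_frng[OF assms]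
  have sa: "seg L (fcat L a x) (deg L a) = a" using seg_eq[OF T(3) T(5)] .
  have sb: "seg L (fcat L b x) (deg L b) = b" using seg_eq[OF T(4) T(6)] .
  have i1: "in_dom L (fcat L a x) (deg L a)" unfolding in_dom_def using T(5) by blast
  have i2: "in_dom L (fcat L b x) (deg L b)" unfolding in_dom_def using T(6) by blast
  have fs: "fshift L (fcat L a x) (deg L a) = fshift L (fcat L b x) (deg L b)"
    unfolding fshift_sh sa sb T(7) T(8) ..
  have F: "fcat L a x \<in> filters L" "fcat L b x \<in> filters L" using T(3,4) filters_def by blast+
  show ?thesis unfolding Ft_simp pg_mem using F i1 i2 fs deg_P[OF t(1)] deg_P[OF t(2)] by blast
qed

lemma F_inj: assumes t: "(a, b, x) \<in> spi_tri L" and t': "(a', b', x') \<in> spi_tri L"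
  and eq: "Ft L (a, b, x) = Ft L (a', b', x')"
  shows "((a, b, x), (a', b', x')) \<in> spi_rel L"
proof -
  have t1: "a \<in> Mor L" "b \<in> Mor L" "is_filter L x" "src L a = frng L x" "src L b = frng L x" using t tri_mem by blast+
  have t2: "a' \<in> Mor L" "b' \<in> Mor L" "is_filter L x'" "src L a' = frng L x'" "src L b' = frng L x'" using t' tri_mem by blast+
  have e1: "fcat L a x = fcat L a' x'" and e2: "deg L a - deg L b = deg L a' - deg L b'"
    and e3: "fcat L b x = fcat L b' x'" using eq unfolding Ft_simp by auto
  obtain z u v where C: "is_filter L z" "u \<in> Mor L" "v \<in> Mor L" "src L a = rng L u" "src L a' = rng L v"
    "cmp L a u = cmp L a' v" "src L u = frng L z" "src L v = frng L z" "x = fcat L u z" "x' = fcat L v z"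
    by (rule refine[OF t1(3) t2(3) t1(1) t2(1) t1(4) t2(4) e1])
  have ux: "u \<in> x" using a_in_fcat[OF C(1) C(2) C(7)] C(9) by simp
  have vx: "v \<in> x'" using a_in_fcat[OF C(1) C(3) C(8)] C(10) by simp
  have sbu: "src L b = rng L u" using t1(5) C(9) fcat_frng[OF C(1) C(2) C(7)] by simp
  have sbv: "src L b' = rng L v" using t2(5) C(10) fcat_frng[OF C(1) C(3) C(8)] by simp
  have bu: "cmp L b u \<in> fcat L b x" by (rule fcat_in[OF t1(3) t1(2) t1(5) ux])
  have bv: "cmp L b' v \<in> fcat L b x" using fcat_in[OF t2(3) t2(2) t2(5) vx] e3 by simp
  have da: "deg L a + deg L u = deg L a' + deg L v" using deg_cmp[OF t1(1) C(2) C(4)] deg_cmp[OF t2(1) C(3) C(5)] C(6) by simp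
  have "deg L b + deg L u = deg L b' + deg L v" by (rule alg1[OF da e2])
  then have "deg L (cmp L b u) = deg L (cmp L b' v)" using deg_cmp[OF t1(2) C(2) sbu] deg_cmp[OF t2(2) C(3) sbv] by simp
  then have bb: "cmp L b u = cmp L b' v" using filt_deg[OF tri_frng(4)[OF t] bu bv] by simp
  show ?thesis by (rule rel_intro[OF t t' C(1) C(2) C(3) C(7) C(8) C(4) C(5) C(9) C(10) C(6) bb])
qed

lemma F_surj: assumes "p \<in> pg_set P L" shows "\<exists>t\<in>spi_tri L. Ft L t = p"
proof -
  obtain x q y where p: "p = (x, q, y)" by (cases p) auto
  obtain m n where A: "x \<in> filters L" "y \<in> filters L" "m \<in> P" "n \<in> P" "q = m - n" "in_dom L x m" "in_dom L y n"
    "fshift L x m = fshift L y n" using assms unfolding p pg_mem by blast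
  have fx: "is_filter L x" and fy: "is_filter L y" using A(1,2) filters_def by auto
  define a where "a = seg L x m"
  define b where "b = seg L y n"
  have a: "a \<in> x" "deg L a = m" using seg_in[OF fx A(6)] a_def by auto
  have b: "b \<in> y" "deg L b = n" using seg_in[OF fy A(7)] b_def by auto
  define z where "z = sh L a x"
  have zb: "z = sh L b y" using A(8) unfolding fshift_sh z_def a_def b_def .
  have fz: "is_filter L z" using sh_filter(1)[OF fx a(1)] z_def by simp
  have sa: "src L a = frng L z" using sh_filter(2)[OF fx a(1)] z_def by simp
  have sb: "src L b = frng L z" using sh_filter(2)[OF fy b(1)] zb by simp
  have t: "(a, b, z) \<in> spi_tri L" unfolding tri_mem using filt_mor[OF fx a(1)] filt_mor[OF fy b(1)] fz sa sb by blast
  have "fcat L a z = x" using fcat_sh[OF fx a(1)] z_def by simp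
  moreover have "fcat L b z = y" using fcat_sh[OF fy b(1)] zb by simp
  ultimately have "Ft L (a, b, z) = p" unfolding Ft_simp p using a(2) b(2) A(5) by simp
  then show ?thesis using t by blast
qed

lemma cls_def': "spi_cls L a b x = spi_rel L `` {(a, b, x)}" unfolding spi_cls_def ..

lemma fmap_cls: assumes "t \<in> spi_tri L" shows "fmap L (spi_rel L `` {t}) = Ft L t"
proof -
  let ?Q = "\<lambda>s. s \<in> spi_tri L \<and> spi_rel L `` {t} = spi_rel L `` {s}"
  have "?Q t" using assms by simp
  then have q: "?Q (SOME s. ?Q s)" by (rule someI)
  then have "((SOME s. ?Q s), t) \<in> spi_rel L" using eq_equiv_class_iff[OF rel_equiv] assms by blast
  then have "Ft L (SOME s. ?Q s) = Ft L t" by (rule F_inv2)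
  then show ?thesis unfolding fmap_def by simp
qed

lemma fmap_cls3: "(a, b, x) \<in> spi_tri L \<Longrightarrow> fmap L (spi_cls L a b x) = Ft L (a, b, x)"
  unfolding cls_def' by (rule fmap_cls)

lemma spi_set_E: assumes "c \<in> spi_set L" obtains a b x where "(a, b, x) \<in> spi_tri L" "c = spi_cls L a b x"
proof -
  obtain t where "t \<in> spi_tri L" "c = spi_rel L `` {t}" using assms unfolding spi_set_def by (rule quotientE)
  then show ?thesis using that unfolding cls_def' by (cases t) blast
qed

lemma cls_in: "(a, b, x) \<in> spi_tri L \<Longrightarrow> spi_cls L a b x \<in> spi_set L"
  unfolding cls_def' spi_set_def by (rule quotientI)

lemma cls_eq: "(a, b, x) \<in> spi_tri L \<Longrightarrow> (a', b', x') \<in> spi_tri L \<Longrightarrow>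
   spi_cls L a b x = spi_cls L a' b' x' \<longleftrightarrow> Ft L (a, b, x) = Ft L (a', b', x')"
  unfolding cls_def' using eq_equiv_class_iff[OF rel_equiv] F_inj F_inv by blast

lemma fmap_inj: "inj_on (fmap L) (spi_set L)"
proof (rule inj_onI)
  fix c d assume c: "c \<in> spi_set L" and d: "d \<in> spi_set L" and e: "fmap L c = fmap L d"
  obtain a b x where t: "(a, b, x) \<in> spi_tri L" "c = spi_cls L a b x" using spi_set_E[OF c] by blast
  obtain a' b' x' where t': "(a', b', x') \<in> spi_tri L" "d = spi_cls L a' b' x'" using spi_set_E[OF d] by blast
  have "Ft L (a, b, x) = Ft L (a', b', x')" using e fmap_cls3[OF t(1)] fmap_cls3[OF t'(1)] t(2) t'(2) by simp
  then show "c = d" using cls_eq[OF t(1) t'(1)] t(2) t'(2) by simp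
qed

lemma fmap_image: "fmap L ` spi_set L = pg_set P L"
proof
  show "fmap L ` spi_set L \<subseteq> pg_set P L"
  proof
    fix p assume "p \<in> fmap L ` spi_set L"
    then obtain c where c: "c \<in> spi_set L" "p = fmap L c" by blast
    obtain a b x where t: "(a, b, x) \<in> spi_tri L" "c = spi_cls L a b x" using spi_set_E[OF c(1)] by blast
    show "p \<in> pg_set P L" using F_in_pg[OF t(1)] fmap_cls3[OF t(1)] c(2) t(2) by simp
  qed
  show "pg_set P L \<subseteq> fmap L ` spi_set L"
  proof
    fix p assume "p \<in> pg_set P L"
    then obtain t where t: "t \<in> spi_tri L" "Ft L t = p" using F_surj by blast
    obtain a b x where "t = (a, b, x)" by (cases t) auto
    then show "p \<in> fmap L ` spi_set L" using t cls_in fmap_cls3 by (metis image_eqI)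
  qed
qed

lemma fmap_bij: "bij_betw (fmap L) (spi_set L) (pg_set P L)"
  unfolding bij_betw_def using fmap_inj fmap_image by blast


section \<open>Algebraic structure\<close>

lemma comp_iff: assumes c: "c \<in> spi_set L" and d: "d \<in> spi_set L"
  shows "spi_comp L c d \<longleftrightarrow> pg_comp (fmap L c) (fmap L d)"
proof
  assume "spi_comp L c d"
  then obtain a b x a' b' y where A: "(a, b, x) \<in> spi_tri L" "(a', b', y) \<in> spi_tri L"
    "c = spi_cls L a b x" "d = spi_cls L a' b' y" "fcat L b x = fcat L a' y" unfolding spi_comp_def by blast
  show "pg_comp (fmap L c) (fmap L d)" unfolding pg_comp_def A(3,4) fmap_cls3[OF A(1)] fmap_cls3[OF A(2)] Ft_simp
    using A(5) by simp
next
  assume p: "pg_comp (fmap L c) (fmap L d)"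
  obtain a b x where t: "(a, b, x) \<in> spi_tri L" "c = spi_cls L a b x" using spi_set_E[OF c] by blast
  obtain a' b' y where t': "(a', b', y) \<in> spi_tri L" "d = spi_cls L a' b' y" using spi_set_E[OF d] by blast
  have "fcat L b x = fcat L a' y" using p unfolding pg_comp_def t(2) t'(2) fmap_cls3[OF t(1)] fmap_cls3[OF t'(1)] Ft_simp by simp
  then show "spi_comp L c d" unfolding spi_comp_def using t t' by blast
qed

definition mult_pred :: "('a, 'q) pgraph \<Rightarrow> ('a \<times> 'a \<times> 'a set) set \<Rightarrow> ('a \<times> 'a \<times> 'a set) set \<Rightarrow> ('a \<times> 'a \<times> 'a set) set \<Rightarrow> bool" where
  "mult_pred L' c d e \<longleftrightarrow> (\<exists>a b x g h y z xi eta.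
      (a, b, x) \<in> spi_tri L' \<and> (g, h, y) \<in> spi_tri L' \<and>
      c = spi_cls L' a b x \<and> d = spi_cls L' g h y \<and> fcat L' b x = fcat L' g y \<and>
      z \<in> filters L' \<and> xi \<in> Mor L' \<and> eta \<in> Mor L' \<and>
      src L' xi = frng L' z \<and> src L' eta = frng L' z \<and> src L' b = rng L' xi \<and> src L' g = rng L' eta \<and>
      x = fcat L' xi z \<and> y = fcat L' eta z \<and> cmp L' b xi = cmp L' g eta \<and>
      e = spi_cls L' (cmp L' a xi) (cmp L' h eta) z)"

lemma spi_mult_pred: "spi_mult L c d = (THE e. mult_pred L c d e)"
  unfolding spi_mult_def mult_pred_def ..

lemma mult_cand: assumes "mult_pred L c d e"
  shows "e \<in> spi_set L \<and> fmap L e = pg_mult (fmap L c) (fmap L d)"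
proof -
  obtain a b x g h y z xi eta where A: "(a, b, x) \<in> spi_tri L" "(g, h, y) \<in> spi_tri L"
      "c = spi_cls L a b x" "d = spi_cls L g h y" "fcat L b x = fcat L g y"
      "z \<in> filters L" "xi \<in> Mor L" "eta \<in> Mor L"
      "src L xi = frng L z" "src L eta = frng L z" "src L b = rng L xi" "src L g = rng L eta"
      "x = fcat L xi z" "y = fcat L eta z" "cmp L b xi = cmp L g eta"
      "e = spi_cls L (cmp L a xi) (cmp L h eta) z" using assms unfolding mult_pred_def by blast
  have t1: "a \<in> Mor L" "b \<in> Mor L" "is_filter L x" "src L a = frng L x" "src L b = frng L x" using A(1) tri_mem by blast+
  have t2: "g \<in> Mor L" "h \<in> Mor L" "is_filter L y" "src L g = frng L y" "src L h = frng L y" using A(2) tri_mem by blast+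
  have fz: "is_filter L z" using A(6) filters_def by blast
  have sa: "src L a = rng L xi" using t1(4,5) A(11) by simp
  have sh: "src L h = rng L eta" using t2(4,5) A(12) by simp
  have m1: "cmp L a xi \<in> Mor L" by (rule cmp_mor[OF t1(1) A(7) sa])
  have m2: "cmp L h eta \<in> Mor L" by (rule cmp_mor[OF t2(2) A(8) sh])
  have s1: "src L (cmp L a xi) = frng L z" using src_cmp[OF t1(1) A(7) sa] A(9) by simp
  have s2: "src L (cmp L h eta) = frng L z" using src_cmp[OF t2(2) A(8) sh] A(10) by simp
  have t: "(cmp L a xi, cmp L h eta, z) \<in> spi_tri L" unfolding tri_mem using m1 m2 fz s1 s2 by blast
  have f1: "fcat L (cmp L a xi) z = fcat L a x" using fcat_fcat[OF fz t1(1) A(7) sa A(9)] A(13) by simp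
  have f2: "fcat L (cmp L h eta) z = fcat L h y" using fcat_fcat[OF fz t2(2) A(8) sh A(10)] A(14) by simp
  have dd: "deg L b + deg L xi = deg L g + deg L eta" using deg_cmp[OF t1(2) A(7) A(11)] deg_cmp[OF t2(1) A(8) A(12)] A(15) by simp
  have dg: "deg L (cmp L a xi) - deg L (cmp L h eta) = (deg L a - deg L b) + (deg L g - deg L h)"
    using deg_cmp[OF t1(1) A(7) sa] deg_cmp[OF t2(2) A(8) sh] alg3[OF dd] by simp
  have "fmap L e = Ft L (cmp L a xi, cmp L h eta, z)" using fmap_cls3[OF t] A(16) by simp
  also have "\<dots> = pg_mult (fmap L c) (fmap L d)"
    unfolding A(3) A(4) fmap_cls3[OF A(1)] fmap_cls3[OF A(2)] Ft_simp pg_mult_def using f1 f2 dg by simp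
  finally show ?thesis using cls_in[OF t] A(16) by simp
qed

lemma mult_ex: assumes c: "c \<in> spi_set L" and d: "d \<in> spi_set L" and cd: "spi_comp L c d"
  shows "\<exists>e. mult_pred L c d e"
proof -
  obtain a b x g h y where A: "(a, b, x) \<in> spi_tri L" "(g, h, y) \<in> spi_tri L"
    "c = spi_cls L a b x" "d = spi_cls L g h y" "fcat L b x = fcat L g y" using cd unfolding spi_comp_def by blast
  have t1: "a \<in> Mor L" "b \<in> Mor L" "is_filter L x" "src L a = frng L x" "src L b = frng L x" using A(1) tri_mem by blast+
  have t2: "g \<in> Mor L" "h \<in> Mor L" "is_filter L y" "src L g = frng L y" "src L h = frng L y" using A(2) tri_mem by blast+
  obtain z u v where C: "is_filter L z" "u \<in> Mor L" "v \<in> Mor L" "src L b = rng L u" "src L g = rng L v"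
    "cmp L b u = cmp L g v" "src L u = frng L z" "src L v = frng L z" "x = fcat L u z" "y = fcat L v z"
    by (rule refine[OF t1(3) t2(3) t1(2) t2(1) t1(5) t2(4) A(5)])
  have zF: "z \<in> filters L" using C(1) filters_def by blast
  show ?thesis unfolding mult_pred_def using A C(2-10) zF by blast
qed

lemma mult_ok: assumes c: "c \<in> spi_set L" and d: "d \<in> spi_set L" and cd: "spi_comp L c d"
  shows "fmap L (spi_mult L c d) = pg_mult (fmap L c) (fmap L d)"
proof -
  have ex1: "\<exists>!e. mult_pred L c d e"
  proof -
    obtain e where e: "mult_pred L c d e" using mult_ex[OF assms] by blast
    have "e' = e" if "mult_pred L c d e'" for e'
      using mult_cand[OF that] mult_cand[OF e] fmap_inj unfolding inj_on_def by metis
    then show ?thesis using e by blast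
  qed
  have "mult_pred L c d (spi_mult L c d)" unfolding spi_mult_pred by (rule theI'[OF ex1])
  then show ?thesis using mult_cand by blast
qed

definition inv_pred :: "('a, 'q) pgraph \<Rightarrow> ('a \<times> 'a \<times> 'a set) set \<Rightarrow> ('a \<times> 'a \<times> 'a set) set \<Rightarrow> bool" where
  "inv_pred L' c e \<longleftrightarrow> (\<exists>a b x. (a, b, x) \<in> spi_tri L' \<and> c = spi_cls L' a b x \<and> e = spi_cls L' b a x)"

lemma inv_cand: assumes "inv_pred L c e"
  shows "e \<in> spi_set L \<and> fmap L e = pg_inv (fmap L c)"
proof -
  obtain a b x where A: "(a, b, x) \<in> spi_tri L" "c = spi_cls L a b x" "e = spi_cls L b a x"
    using assms unfolding inv_pred_def by blast
  have t: "(b, a, x) \<in> spi_tri L" using A(1) tri_mem by blast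
  have "fmap L e = Ft L (b, a, x)" using fmap_cls3[OF t] A(3) by simp
  also have "\<dots> = pg_inv (fmap L c)" unfolding A(2) fmap_cls3[OF A(1)] Ft_simp pg_inv_def
    by (simp add: minus_diff_eq)
  finally show ?thesis using cls_in[OF t] A(3) by simp
qed

lemma inv_ok: assumes c: "c \<in> spi_set L"
  shows "fmap L (spi_inv L c) = pg_inv (fmap L c)" "spi_inv L c \<in> spi_set L"
proof -
  have ex1: "\<exists>!e. inv_pred L c e"
  proof -
    obtain a b x where t: "(a, b, x) \<in> spi_tri L" "c = spi_cls L a b x" using spi_set_E[OF c] by blast
    have e: "inv_pred L c (spi_cls L b a x)" unfolding inv_pred_def using t by blast
    have "e' = spi_cls L b a x" if "inv_pred L c e'" for e'
      using inv_cand[OF that] inv_cand[OF e] fmap_inj unfolding inj_on_def by metis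
    then show ?thesis using e by blast
  qed
  have "inv_pred L c (spi_inv L c)" unfolding spi_inv_def inv_pred_def[symmetric] by (rule theI'[OF ex1])
  then show "fmap L (spi_inv L c) = pg_inv (fmap L c)" "spi_inv L c \<in> spi_set L" using inv_cand by blast+
qed


section \<open>Topology\<close>

lemma ext_iff: "l \<in> ext L m \<longleftrightarrow> (\<exists>n. n \<in> Mor L \<and> src L m = rng L n \<and> l = cmp L m n)"
  unfolding ext_def by blast

lemma pre_ext: "pre L m l \<longleftrightarrow> m \<in> Mor L \<and> l \<in> ext L m"
  unfolding pre_def ..

lemma ext_self: "k \<in> Mor L \<Longrightarrow> k \<in> ext L k"
  using pre_refl pre_ext by blast

lemma ext_mor: "m \<in> Mor L \<Longrightarrow> l \<in> ext L m \<Longrightarrow> l \<in> Mor L"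
  using pre_ext pre_mor by blast

lemma Ehat_eq: assumes a0: "a0 \<in> Mor L" and B0: "B0 \<subseteq> ext L a0"
  shows "Ehat L a0 B0 = {x \<in> filters L. a0 \<in> x \<and> (\<forall>b\<in>B0. b \<notin> x)}"
proof (intro set_eqI iffI)
  fix x assume "x \<in> Ehat L a0 B0"
  then obtain g where x: "x \<in> filters L" "g \<in> x" "x \<inter> ext L g \<subseteq> ext L a0 - (\<Union>b\<in>B0. ext L b)"
    unfolding Ehat_def by blast
  have fx: "is_filter L x" using x(1) filters_def by blast
  have gM: "g \<in> Mor L" using filt_mor[OF fx x(2)] .
  have "g \<in> ext L a0" using x(2,3) ext_self[OF gM] by blast
  then have "pre L a0 g" using a0 pre_ext by blast
  then have 1: "a0 \<in> x" using filt_her[OF fx x(2)] by blast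
  have 2: "b \<notin> x" if b: "b \<in> B0" for b
  proof
    assume bx: "b \<in> x"
    obtain k where k: "k \<in> x" "pre L g k" "pre L b k" using filt_dir[OF fx x(2) bx] by blast
    have "k \<in> ext L g" "k \<in> ext L b" using k pre_ext by blast+
    then show False using x(3) k(1) b by blast
  qed
  show "x \<in> {x \<in> filters L. a0 \<in> x \<and> (\<forall>b\<in>B0. b \<notin> x)}" using x(1) 1 2 by blast
next
  fix x assume "x \<in> {x \<in> filters L. a0 \<in> x \<and> (\<forall>b\<in>B0. b \<notin> x)}"
  then have x: "x \<in> filters L" "a0 \<in> x" "\<And>b. b \<in> B0 \<Longrightarrow> b \<notin> x" by auto
  have fx: "is_filter L x" using x(1) filters_def by blast
  have "x \<inter> ext L a0 \<subseteq> ext L a0 - (\<Union>b\<in>B0. ext L b)"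
  proof
    fix k assume k: "k \<in> x \<inter> ext L a0"
    have "k \<notin> ext L b" if b: "b \<in> B0" for b
    proof
      assume "k \<in> ext L b"
      moreover have "b \<in> Mor L" using ext_mor[OF a0] B0 b by blast
      ultimately have "pre L b k" using pre_ext by blast
      then show False using filt_her[OF fx _ ] k x(3)[OF b] by blast
    qed
    then show "k \<in> ext L a0 - (\<Union>b\<in>B0. ext L b)" using k by blast
  qed
  then show "x \<in> Ehat L a0 B0" unfolding Ehat_def using x(1,2) by blast
qed

abbreviation "fgen \<equiv> {{x. l \<in> x} | l. l \<in> Mor L} \<union> {{x. l \<notin> x} | l. l \<in> Mor L}"

lemma filter_top_eq: "filter_top L = subtopology (topology_generated_by fgen) (filters L)"
  unfolding filter_top_def ..

lemma fin_inter_open: assumes "finite F" "F \<subseteq> G"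
  shows "openin (topology_generated_by G) (\<Union>G \<inter> \<Inter>F)"
  using assms
proof (induction F rule: finite_induct)
  case empty
  have "openin (topology_generated_by G) (topspace (topology_generated_by G))" by (rule openin_topspace)
  then show ?case by simp
next
  case (insert s F)
  have "\<Union>G \<inter> \<Inter>(insert s F) = s \<inter> (\<Union>G \<inter> \<Inter>F)" using insert(4) by blast
  moreover have "openin (topology_generated_by G) s" using insert(4) topology_generated_by_Basis by blast
  ultimately show ?case using insert by auto
qed

lemma cyl_open: assumes "finite Pos" "finite Neg" "Pos \<subseteq> Mor L" "Neg \<subseteq> Mor L"
  shows "openin (filter_top L) {w \<in> filters L. Pos \<subseteq> w \<and> Neg \<inter> w = {}}"
proof -
  define F where "F = (\<lambda>l. {x. l \<in> x}) ` Pos \<union> (\<lambda>l. {x. l \<notin> x}) ` Neg"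
  have fF: "finite F" unfolding F_def using assms by simp
  have FG: "F \<subseteq> fgen"
  proof
    fix s assume "s \<in> F"
    then consider (p) l where "l \<in> Pos" "s = {x. l \<in> x}" | (n) l where "l \<in> Neg" "s = {x. l \<notin> x}"
      unfolding F_def by blast
    then show "s \<in> fgen"
    proof cases
      case p
      then have "s \<in> {{x. l \<in> x} | l. l \<in> Mor L}" using assms(3) by blast
      then show ?thesis by (rule UnI1)
    next
      case n
      then have "s \<in> {{x. l \<notin> x} | l. l \<in> Mor L}" using assms(4) by blast
      then show ?thesis by (rule UnI2)
    qed
  qed
  have o: "openin (topology_generated_by fgen) (\<Union>fgen \<inter> \<Inter>F)" by (rule fin_inter_open[OF fF FG])
  have sub: "filters L \<subseteq> \<Union>fgen"
  proof
    fix x assume "x \<in> filters L"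
    then have fx: "is_filter L x" using filters_def by blast
    obtain l where l: "l \<in> x" using filt_ne[OF fx] by blast
    have "{x. l \<in> x} \<in> {{x. l \<in> x} | l. l \<in> Mor L}" using filt_mor[OF fx l] by blast
    then have "{x. l \<in> x} \<in> fgen" by (rule UnI1)
    moreover have "x \<in> {x. l \<in> x}" using l by simp
    ultimately show "x \<in> \<Union>fgen" by (rule UnionI)
  qed
  have memF: "w \<in> \<Inter>F \<longleftrightarrow> Pos \<subseteq> w \<and> Neg \<inter> w = {}" for w
  proof
    assume "w \<in> \<Inter>F"
    then have "\<forall>l\<in>Pos. w \<in> {x. l \<in> x}" "\<forall>l\<in>Neg. w \<in> {x. l \<notin> x}" unfolding F_def by blast+
    then show "Pos \<subseteq> w \<and> Neg \<inter> w = {}" by blast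
  next
    assume "Pos \<subseteq> w \<and> Neg \<inter> w = {}"
    then have "\<forall>l\<in>Pos. w \<in> {x. l \<in> x}" "\<forall>l\<in>Neg. w \<in> {x. l \<notin> x}" by blast+
    then show "w \<in> \<Inter>F" unfolding F_def by blast
  qed
  have "{w \<in> filters L. Pos \<subseteq> w \<and> Neg \<inter> w = {}} = (\<Union>fgen \<inter> \<Inter>F) \<inter> filters L"
  proof (intro set_eqI iffI)
    fix w assume w: "w \<in> {w \<in> filters L. Pos \<subseteq> w \<and> Neg \<inter> w = {}}"
    then have w1: "w \<in> filters L" and w2: "Pos \<subseteq> w \<and> Neg \<inter> w = {}" by auto
    have "w \<in> \<Union>fgen" using subsetD[OF sub w1] .
    moreover have "w \<in> \<Inter>F" using memF[of w] w2 by (rule iffD2)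
    ultimately show "w \<in> (\<Union>fgen \<inter> \<Inter>F) \<inter> filters L" using w1 by (intro IntI)
  next
    fix w assume w: "w \<in> (\<Union>fgen \<inter> \<Inter>F) \<inter> filters L"
    then have w1: "w \<in> filters L" and w2: "w \<in> \<Inter>F" by (rule IntD2, rule IntD2[OF IntD1])
    have "Pos \<subseteq> w \<and> Neg \<inter> w = {}" using memF[of w] w2 by (rule iffD1)
    then show "w \<in> {w \<in> filters L. Pos \<subseteq> w \<and> Neg \<inter> w = {}}" using w1 by simp
  qed
  then show ?thesis unfolding filter_top_eq openin_subtopology using o by (intro exI conjI)
qed

lemma filt_top_sub: "topspace (filter_top L) \<subseteq> filters L"
  unfolding filter_top_eq topspace_subtopology by (rule Int_lower2)

lemma fa_ex: assumes "m \<in> Mor L" "n \<in> Mor L"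
  shows "\<exists>J. finite J \<and> J \<subseteq> Mor L \<and> ext L m \<inter> ext L n = (\<Union>k\<in>J. ext L k)"
proof -
  have "\<forall>m\<in>Mor L. \<forall>n\<in>Mor L. \<exists>J. finite J \<and> J \<subseteq> Mor L \<and> ext L m \<inter> ext L n = (\<Union>k\<in>J. ext L k)"
    using fa unfolding finitely_aligned_def .
  from bspec[OF bspec[OF this assms(1)] assms(2)] show ?thesis .
qed

lemma cont:
  assumes "generate_topology_on fgen Op" and aM: "\<alpha> \<in> Mor L"
  shows "\<And>z. is_filter L z \<Longrightarrow> src L \<alpha> = frng L z \<Longrightarrow> fcat L \<alpha> z \<in> Op \<Longrightarrow>
    \<exists>Pos Neg. finite Pos \<and> finite Neg \<and> Pos \<subseteq> Mor L \<and> Neg \<subseteq> Mor L \<and> Pos \<subseteq> z \<and> Neg \<inter> z = {} \<and>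
      (\<forall>z'. is_filter L z' \<and> src L \<alpha> = frng L z' \<and> Pos \<subseteq> z' \<and> Neg \<inter> z' = {} \<longrightarrow> fcat L \<alpha> z' \<in> Op)"
  using assms(1)
proof induct
  case Empty then show ?case by simp
next
  case (Int a b)
  obtain P1 N1 where 1: "finite P1" "finite N1" "P1 \<subseteq> Mor L" "N1 \<subseteq> Mor L" "P1 \<subseteq> z" "N1 \<inter> z = {}"
    "\<forall>z'. is_filter L z' \<and> src L \<alpha> = frng L z' \<and> P1 \<subseteq> z' \<and> N1 \<inter> z' = {} \<longrightarrow> fcat L \<alpha> z' \<in> a"
    using Int(2)[OF Int(5) Int(6)] Int(7) by blast
  obtain P2 N2 where 2: "finite P2" "finite N2" "P2 \<subseteq> Mor L" "N2 \<subseteq> Mor L" "P2 \<subseteq> z" "N2 \<inter> z = {}"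
    "\<forall>z'. is_filter L z' \<and> src L \<alpha> = frng L z' \<and> P2 \<subseteq> z' \<and> N2 \<inter> z' = {} \<longrightarrow> fcat L \<alpha> z' \<in> b"
    using Int(4)[OF Int(5) Int(6)] Int(7) by blast
  have 3: "\<forall>z'. is_filter L z' \<and> src L \<alpha> = frng L z' \<and> P1 \<union> P2 \<subseteq> z' \<and> (N1 \<union> N2) \<inter> z' = {} \<longrightarrow> fcat L \<alpha> z' \<in> a \<inter> b"
  proof (intro allI impI)
    fix z' assume h: "is_filter L z' \<and> src L \<alpha> = frng L z' \<and> P1 \<union> P2 \<subseteq> z' \<and> (N1 \<union> N2) \<inter> z' = {}"
    then have "is_filter L z' \<and> src L \<alpha> = frng L z' \<and> P1 \<subseteq> z' \<and> N1 \<inter> z' = {}"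
      "is_filter L z' \<and> src L \<alpha> = frng L z' \<and> P2 \<subseteq> z' \<and> N2 \<inter> z' = {}" by blast+
    then show "fcat L \<alpha> z' \<in> a \<inter> b" using 1(7) 2(7) by blast
  qed
  have 4: "finite (P1 \<union> P2)" "finite (N1 \<union> N2)" "P1 \<union> P2 \<subseteq> Mor L" "N1 \<union> N2 \<subseteq> Mor L" "P1 \<union> P2 \<subseteq> z"
    "(N1 \<union> N2) \<inter> z = {}" using 1 2 by auto
  show ?case using 3 4 by (intro exI[of _ "P1 \<union> P2"] exI[of _ "N1 \<union> N2"] conjI)
next
  case (UN K)
  obtain k where k: "k \<in> K" "fcat L \<alpha> z \<in> k" using UN(5) by blast
  obtain P1 N1 where 1: "finite P1" "finite N1" "P1 \<subseteq> Mor L" "N1 \<subseteq> Mor L" "P1 \<subseteq> z" "N1 \<inter> z = {}"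
    "\<forall>z'. is_filter L z' \<and> src L \<alpha> = frng L z' \<and> P1 \<subseteq> z' \<and> N1 \<inter> z' = {} \<longrightarrow> fcat L \<alpha> z' \<in> k"
    using UN(2)[OF k(1) UN(3) UN(4) k(2)] by blast
  have 3: "\<forall>z'. is_filter L z' \<and> src L \<alpha> = frng L z' \<and> P1 \<subseteq> z' \<and> N1 \<inter> z' = {} \<longrightarrow> fcat L \<alpha> z' \<in> \<Union>K"
    using 1(7) k(1) by blast
  show ?case using 3 1(1-6) by (intro exI[of _ P1] exI[of _ N1] conjI)
next
  case (Basis s)
  have zf: "is_filter L z" and sz: "src L \<alpha> = frng L z" and inS: "fcat L \<alpha> z \<in> s" by (fact Basis(2), fact Basis(3), fact Basis(4))
  have "(\<exists>l. l \<in> Mor L \<and> s = {x. l \<in> x}) \<or> (\<exists>l. l \<in> Mor L \<and> s = {x. l \<notin> x})" using Basis(1) by blast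
  then consider (pos) l where "l \<in> Mor L" "s = {x. l \<in> x}" | (neg) l where "l \<in> Mor L" "s = {x. l \<notin> x}" by blast
  then show ?case
  proof cases
    case pos
    have "l \<in> fcat L \<alpha> z" using inS pos(2) by simp
    then obtain g where g: "g \<in> z" "src L \<alpha> = rng L g" "pre L l (cmp L \<alpha> g)" unfolding fcat_mem by blast
    have gM: "g \<in> Mor L" using filt_mor[OF zf g(1)] .
    have A: "\<forall>z'. is_filter L z' \<and> src L \<alpha> = frng L z' \<and> {g} \<subseteq> z' \<and> {} \<inter> z' = {} \<longrightarrow> fcat L \<alpha> z' \<in> s"
    proof (intro allI impI)
      fix z' assume "is_filter L z' \<and> src L \<alpha> = frng L z' \<and> {g} \<subseteq> z' \<and> {} \<inter> z' = {}"
      then have "g \<in> z'" by blast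
      then have "l \<in> fcat L \<alpha> z'" unfolding fcat_mem using g(2,3) by blast
      then show "fcat L \<alpha> z' \<in> s" using pos(2) by simp
    qed
    have B: "finite {g}" "finite ({}::'a set)" "{g} \<subseteq> Mor L" "({}::'a set) \<subseteq> Mor L" "{g} \<subseteq> z" "{} \<inter> z = {}"
      using gM g(1) by auto
    show ?thesis using A B by (intro exI[of _ "{g}"] exI[of _ "{}"] conjI)
  next
    case neg
    have lnot: "l \<notin> fcat L \<alpha> z" using inS neg(2) by simp
    obtain J where J: "finite J" "J \<subseteq> Mor L" "ext L \<alpha> \<inter> ext L l = (\<Union>k\<in>J. ext L k)"
      using fa_ex[OF aM neg(1)] by (elim exE conjE)
    define N where "N = {g \<in> Mor L. src L \<alpha> = rng L g \<and> cmp L \<alpha> g \<in> J}"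
    have Nmem: "g \<in> N \<longleftrightarrow> g \<in> Mor L \<and> src L \<alpha> = rng L g \<and> cmp L \<alpha> g \<in> J" for g
      unfolding N_def by simp
    have inj: "inj_on (cmp L \<alpha>) N"
    proof (rule inj_onI)
      fix g1 g2 assume g1: "g1 \<in> N" and g2: "g2 \<in> N" and e: "cmp L \<alpha> g1 = cmp L \<alpha> g2"
      show "g1 = g2" using cancel[OF aM _ _ _ _ e] g1 g2 unfolding Nmem by blast
    qed
    have img: "cmp L \<alpha> ` N \<subseteq> J" using Nmem by blast
    have "finite (cmp L \<alpha> ` N)" using finite_subset[OF img J(1)] .
    then have fN: "finite N" using finite_imageD[OF _ inj] by blast
    have NM: "N \<subseteq> Mor L" using Nmem by blast
    have UJ: "y \<in> ext L \<alpha> \<inter> ext L l \<longleftrightarrow> (\<exists>k\<in>J. y \<in> ext L k)" for y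
      using J(3) by (simp only: UN_iff)
    have key: "l \<in> fcat L \<alpha> z'" if "g \<in> N" "g \<in> z'" for g z'
    proof -
      have g: "g \<in> Mor L" "src L \<alpha> = rng L g" "cmp L \<alpha> g \<in> J" using that(1) unfolding Nmem by auto
      have "cmp L \<alpha> g \<in> Mor L" using J(2) g(3) by blast
      then have "cmp L \<alpha> g \<in> ext L (cmp L \<alpha> g)" by (rule ext_self)
      then have "cmp L \<alpha> g \<in> ext L l" using UJ g(3) by blast
      then have "pre L l (cmp L \<alpha> g)" using neg(1) pre_ext by blast
      then show ?thesis unfolding fcat_mem using that(2) g(2) by blast
    qed
    have 1: "N \<inter> z = {}" using key lnot by blast
    have 2: "fcat L \<alpha> z' \<in> s" if z': "is_filter L z'" "N \<inter> z' = {}" for z'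
    proof (rule ccontr)
      assume "fcat L \<alpha> z' \<notin> s"
      then have "l \<in> fcat L \<alpha> z'" using neg(2) by simp
      then obtain g where g: "g \<in> z'" "src L \<alpha> = rng L g" "pre L l (cmp L \<alpha> g)" unfolding fcat_mem by blast
      have gM: "g \<in> Mor L" using filt_mor[OF z'(1) g(1)] .
      have "cmp L \<alpha> g \<in> ext L \<alpha>" using pre_cmp[OF aM gM g(2)] pre_ext by blast
      moreover have "cmp L \<alpha> g \<in> ext L l" using g(3) pre_ext by blast
      ultimately obtain k where k: "k \<in> J" "cmp L \<alpha> g \<in> ext L k" using UJ by blast
      have kM: "k \<in> Mor L" using J(2) k(1) by blast
      have "k \<in> ext L \<alpha>" using UJ[of k] k(1) ext_self[OF kM] by blast
      then obtain gk where gk: "gk \<in> Mor L" "src L \<alpha> = rng L gk" "k = cmp L \<alpha> gk" unfolding ext_iff by blast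
      have "gk \<in> N" unfolding Nmem using gk k(1) by simp
      have "pre L (cmp L \<alpha> gk) (cmp L \<alpha> g)" using k(2) gk(3) kM pre_ext by blast
      then have "pre L gk g" using pre_cancel[OF aM gk(1) gM gk(2) g(2)] by blast
      then have "gk \<in> z'" using filt_her[OF z'(1) g(1)] by blast
      then show False using \<open>gk \<in> N\<close> z'(2) by blast
    qed
    have A: "\<forall>z'. is_filter L z' \<and> src L \<alpha> = frng L z' \<and> {} \<subseteq> z' \<and> N \<inter> z' = {} \<longrightarrow> fcat L \<alpha> z' \<in> s"
      using 2 by blast
    have B: "finite ({}::'a set)" "finite N" "({}::'a set) \<subseteq> Mor L" "N \<subseteq> Mor L" "{} \<subseteq> z" "N \<inter> z = {}"
      using fN NM 1 by auto
    show ?thesis using A B by (intro exI[of _ "{}"] exI[of _ N] conjI)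
  qed
qed

lemma upper_bound: assumes "is_filter L z" "finite Pos" "Pos \<subseteq> z"
  shows "\<exists>a\<in>z. \<forall>p\<in>Pos. pre L p a"
  using assms(2,3)
proof (induction Pos rule: finite_induct)
  case empty then show ?case using frng(2)[OF assms(1)] by blast
next
  case (insert p F)
  then obtain a where a: "a \<in> z" "\<forall>q\<in>F. pre L q a" by blast
  have "p \<in> z" using insert(4) by blast
  then obtain k where k: "k \<in> z" "pre L a k" "pre L p k" using filt_dir[OF assms(1) a(1)] by blast
  have "\<forall>q\<in>insert p F. pre L q k" using a(2) k(2,3) pre_trans by blast
  then show ?case using k(1) by blast
qed

lemma ehat_nbhd: assumes fz: "is_filter L z" and "finite Pos" "finite Neg" "Pos \<subseteq> z" "Neg \<subseteq> Mor L" "Neg \<inter> z = {}"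
  shows "\<exists>E\<in>spi_basis L. z \<in> E \<and> (\<forall>z'\<in>E. is_filter L z' \<and> Pos \<subseteq> z' \<and> Neg \<inter> z' = {})"
proof -
  obtain a where a: "a \<in> z" "\<forall>p\<in>Pos. pre L p a" using upper_bound[OF fz assms(2,4)] by blast
  have aM: "a \<in> Mor L" using filt_mor[OF fz a(1)] .
  define Jf where "Jf = (\<lambda>l. SOME J. finite J \<and> J \<subseteq> Mor L \<and> ext L a \<inter> ext L l = (\<Union>k\<in>J. ext L k))"
  have Jf: "finite (Jf l) \<and> Jf l \<subseteq> Mor L \<and> ext L a \<inter> ext L l = (\<Union>k\<in>Jf l. ext L k)" if "l \<in> Neg" for l
  proof -
    have "l \<in> Mor L" using that assms(5) by blast
    then have "\<exists>J. finite J \<and> J \<subseteq> Mor L \<and> ext L a \<inter> ext L l = (\<Union>k\<in>J. ext L k)"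
      using fa_ex[OF aM] by blast
    then show ?thesis unfolding Jf_def by (rule someI_ex)
  qed
  define B0 where "B0 = (\<Union>l\<in>Neg. Jf l)"
  have fB: "finite B0" unfolding B0_def by (rule finite_UN_I) (use assms(3) Jf in auto)
  have Bsub: "B0 \<subseteq> ext L a - {a}"
  proof
    fix k assume "k \<in> B0"
    then obtain l where l: "l \<in> Neg" "k \<in> Jf l" unfolding B0_def by blast
    have kM: "k \<in> Mor L" using Jf[OF l(1)] l(2) by blast
    have kk: "k \<in> ext L a \<inter> ext L l" using Jf[OF l(1)] l(2) ext_self[OF kM] by blast
    have "k \<noteq> a"
    proof
      assume "k = a"
      then have "pre L l a" using kk assms(5) l(1) pre_ext by blast
      then show False using filt_her[OF fz a(1)] l(1) assms(6) by blast
    qed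
    then show "k \<in> ext L a - {a}" using kk by blast
  qed
  have Eeq: "Ehat L a B0 = {x \<in> filters L. a \<in> x \<and> (\<forall>b\<in>B0. b \<notin> x)}" using Ehat_eq[OF aM] Bsub by blast
  have EB: "Ehat L a B0 \<in> spi_basis L" unfolding spi_basis_def using aM fB Bsub by blast
  have zE: "z \<in> Ehat L a B0"
  proof -
    have "b \<notin> z" if bB: "b \<in> B0" for b
    proof
      assume bz: "b \<in> z"
      obtain l where l: "l \<in> Neg" "b \<in> Jf l" using bB unfolding B0_def by blast
      have bM: "b \<in> Mor L" using Jf[OF l(1)] l(2) by blast
      have "b \<in> ext L l" using Jf[OF l(1)] l(2) ext_self[OF bM] by blast
      then have "pre L l b" using assms(5) l(1) pre_ext by blast
      then show False using filt_her[OF fz bz] l(1) assms(6) by blast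
    qed
    then show ?thesis unfolding Eeq using fz a(1) filters_def by blast
  qed
  have sub: "is_filter L z' \<and> Pos \<subseteq> z' \<and> Neg \<inter> z' = {}" if "z' \<in> Ehat L a B0" for z'
  proof -
    have z': "z' \<in> filters L" "a \<in> z'" "\<And>b. b \<in> B0 \<Longrightarrow> b \<notin> z'" using that unfolding Eeq by auto
    have fz': "is_filter L z'" using z'(1) filters_def by blast
    have "Pos \<subseteq> z'" using a(2) filt_her[OF fz' z'(2)] by blast
    moreover have "l \<notin> z'" if l: "l \<in> Neg" for l
    proof
      assume lz: "l \<in> z'"
      obtain k where k: "k \<in> z'" "pre L a k" "pre L l k" using filt_dir[OF fz' z'(2) lz] by blast
      have "k \<in> ext L a \<inter> ext L l" using k pre_ext by blast
      then obtain j where j: "j \<in> Jf l" "k \<in> ext L j" using Jf[OF l] by blast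
      have "j \<in> Mor L" using Jf[OF l] j(1) by blast
      then have "pre L j k" using j(2) pre_ext by blast
      then have "j \<in> z'" using filt_her[OF fz' k(1)] by blast
      moreover have "j \<in> B0" unfolding B0_def using l j(1) by blast
      ultimately show False using z'(3) by blast
    qed
    ultimately show ?thesis using fz' by blast
  qed
  show ?thesis using EB zE sub by blast
qed


section \<open>Homeomorphism\<close>

lemma pg_top_eq: "pg_top P L = subtopology (topology_generated_by
     {Wset P L m n U V | m n U V. m \<in> P \<and> n \<in> P \<and> openin (filter_top L) U \<and> openin (filter_top L) V}) (pg_set P L)"
  unfolding pg_top_def Wset_def ..

lemma spi_top_eq: "spi_top L = subtopology (topology_generated_by
     {Sset L a b B | a b B. a \<in> Mor L \<and> b \<in> Mor L \<and> B \<in> spi_basis L}) (spi_set L)"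
  unfolding spi_top_def Sset_def ..

lemma W_mem: "p \<in> Wset P L m n U V \<longleftrightarrow> (\<exists>x y. p = (x, m - n, y) \<and> (x, m - n, y) \<in> pg_set P L \<and> x \<in> U \<and> y \<in> V \<and>
     in_dom L x m \<and> in_dom L y n \<and> fshift L x m = fshift L y n)"
  unfolding Wset_def by blast

lemma S_mem: "c \<in> Sset L a b B \<longleftrightarrow> (\<exists>x. c = spi_cls L a b x \<and> x \<in> B \<and> (a, b, x) \<in> spi_tri L)"
  unfolding Sset_def by blast

lemma W_sub: "Wset P L m n U V \<subseteq> pg_set P L"
  unfolding Wset_def by blast

lemma S_sub: "Sset L a b B \<subseteq> spi_set L"
  unfolding Sset_def using cls_in by blast

lemma F_props: assumes "(a, b, x) \<in> spi_tri L"
  shows "in_dom L (fcat L a x) (deg L a)" "in_dom L (fcat L b x) (deg L b)"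
    "fshift L (fcat L a x) (deg L a) = x" "fshift L (fcat L b x) (deg L b) = x"
    "fcat L a x \<in> filters L" "fcat L b x \<in> filters L"
proof -
  note T = tri_frng[OF assms]
  have sa: "seg L (fcat L a x) (deg L a) = a" using seg_eq[OF T(3) T(5)] .
  have sb: "seg L (fcat L b x) (deg L b) = b" using seg_eq[OF T(4) T(6)] .
  show "in_dom L (fcat L a x) (deg L a)" unfolding in_dom_def using T(5) by blast
  show "in_dom L (fcat L b x) (deg L b)" unfolding in_dom_def using T(6) by blast
  show "fshift L (fcat L a x) (deg L a) = x" unfolding fshift_sh sa using T(7) .
  show "fshift L (fcat L b x) (deg L b) = x" unfolding fshift_sh sb using T(8) .
  show "fcat L a x \<in> filters L" "fcat L b x \<in> filters L" using T(3,4) filters_def by blast+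
qed

lemma recon: assumes fx: "is_filter L x" and fy: "is_filter L y" and a: "a \<in> x" and b: "b \<in> y"
  and e: "sh L a x = sh L b y"
  shows "(a, b, sh L a x) \<in> spi_tri L" "Ft L (a, b, sh L a x) = (x, deg L a - deg L b, y)"
proof -
  have fz: "is_filter L (sh L a x)" using sh_filter(1)[OF fx a] .
  have sa: "src L a = frng L (sh L a x)" using sh_filter(2)[OF fx a] by simp
  have sb: "src L b = frng L (sh L a x)" using sh_filter(2)[OF fy b] e by simp
  show "(a, b, sh L a x) \<in> spi_tri L" unfolding tri_mem using filt_mor[OF fx a] filt_mor[OF fy b] fz sa sb by blast
  have "fcat L a (sh L a x) = x" using fcat_sh[OF fx a] .
  moreover have "fcat L b (sh L a x) = y" using fcat_sh[OF fy b] e by simp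
  ultimately show "Ft L (a, b, sh L a x) = (x, deg L a - deg L b, y)" unfolding Ft_simp by simp
qed

lemma open_i: assumes a: "a \<in> Mor L" and b: "b \<in> Mor L" and B: "B \<in> spi_basis L"
  shows "openin (pg_top P L) (fmap L ` (Sset L a b B \<inter> spi_set L))"
proof -
  have SS: "Sset L a b B \<inter> spi_set L = Sset L a b B" using S_sub by blast
  obtain a0 B0 where B0: "B = Ehat L a0 B0" "a0 \<in> Mor L" "finite B0" "B0 \<subseteq> ext L a0 - {a0}"
    using B unfolding spi_basis_def by blast
  have B0e: "B0 \<subseteq> ext L a0" using B0(4) by blast
  have Beq: "B = {x \<in> filters L. a0 \<in> x \<and> (\<forall>b\<in>B0. b \<notin> x)}" using Ehat_eq[OF B0(2) B0e] B0(1) by simp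
  show ?thesis
  proof (cases "src L a = rng L a0")
    case False
    have "Sset L a b B = {}"
    proof (rule ccontr)
      assume "Sset L a b B \<noteq> {}"
      then obtain c where "c \<in> Sset L a b B" by blast
      then obtain x where x: "x \<in> B" "(a, b, x) \<in> spi_tri L" unfolding S_mem by blast
      have "is_filter L x" "a0 \<in> x" using x(1) Beq filters_def by auto
      then have "rng L a0 = frng L x" using frng(3) by blast
      then show False using False x(2) tri_mem by simp
    qed
    then show ?thesis using SS by simp
  next
    case True
    have rb: "rng L b' = src L a" "b' \<in> Mor L" if "b' \<in> B0" for b'
    proof -
      have "pre L a0 b'" using that B0e B0(2) pre_ext by blast
      then show "rng L b' = src L a" "b' \<in> Mor L" using pre_rng pre_mor True by auto
    qed
    have aa0: "cmp L a a0 \<in> Mor L" using cmp_mor[OF a B0(2) True] .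
    define Pos where "Pos = {cmp L a a0}"
    define Neg where "Neg = cmp L a ` B0"
    define U where "U = {w \<in> filters L. Pos \<subseteq> w \<and> Neg \<inter> w = {}}"
    define V where "V = {w \<in> filters L. {b} \<subseteq> w \<and> {} \<inter> w = {}}"
    have NegM: "Neg \<subseteq> Mor L" unfolding Neg_def using cmp_mor[OF a] rb by auto
    have oU: "openin (filter_top L) U" unfolding U_def
      by (rule cyl_open) (use aa0 NegM B0(3) in \<open>auto simp: Pos_def Neg_def\<close>)
    have oV: "openin (filter_top L) V" unfolding V_def
      by (rule cyl_open) (use b in auto)
    have eq: "fmap L ` Sset L a b B = Wset P L (deg L a) (deg L b) U V"
    proof (intro set_eqI iffI)
      fix p assume "p \<in> fmap L ` Sset L a b B"
      then obtain c where c: "c \<in> Sset L a b B" "p = fmap L c" by blast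
      then obtain x where x: "c = spi_cls L a b x" "x \<in> B" "(a, b, x) \<in> spi_tri L" unfolding S_mem by blast
      have xB: "x \<in> filters L" "a0 \<in> x" "\<And>b'. b' \<in> B0 \<Longrightarrow> b' \<notin> x" using x(2) Beq by auto
      have t: "is_filter L x" "src L a = frng L x" using x(3) tri_mem by blast+
      have p: "p = (fcat L a x, deg L a - deg L b, fcat L b x)" using c(2) x(1) fmap_cls3[OF x(3)] Ft_simp by simp
      have pp: "(fcat L a x, deg L a - deg L b, fcat L b x) \<in> pg_set P L" using F_in_pg[OF x(3)] unfolding Ft_simp .
      note FP = F_props[OF x(3)]
      have "cmp L a a0 \<in> fcat L a x" by (rule fcat_in[OF t(1) a t(2) xB(2)])
      moreover have "Neg \<inter> fcat L a x = {}"
      proof (rule ccontr)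
        assume "Neg \<inter> fcat L a x \<noteq> {}"
        then obtain b' where b': "b' \<in> B0" "cmp L a b' \<in> fcat L a x" unfolding Neg_def by blast
        have "b' \<in> sh L a (fcat L a x)" unfolding sh_mem using b' rb[OF b'(1)] by simp
        then have "b' \<in> x" using tri_frng(7)[OF x(3)] by simp
        then show False using xB(3)[OF b'(1)] by blast
      qed
      ultimately have inU: "fcat L a x \<in> U" unfolding U_def Pos_def using FP(5) by blast
      have inV: "fcat L b x \<in> V" unfolding V_def using FP(6) tri_frng(6)[OF x(3)] by blast
      show "p \<in> Wset P L (deg L a) (deg L b) U V" unfolding W_mem
        using p pp inU inV FP(1-4) by blast
    next
      fix p assume "p \<in> Wset P L (deg L a) (deg L b) U V"
      then obtain x y where p: "p = (x, deg L a - deg L b, y)" "x \<in> U" "y \<in> V"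
        "fshift L x (deg L a) = fshift L y (deg L b)" unfolding W_mem by blast
      have xf: "x \<in> filters L" "cmp L a a0 \<in> x" "Neg \<inter> x = {}" using p(2) unfolding U_def Pos_def by auto
      have yf: "y \<in> filters L" "b \<in> y" using p(3) unfolding V_def by auto
      have fx: "is_filter L x" and fy: "is_filter L y" using xf(1) yf(1) filters_def by auto
      have ax: "a \<in> x" using filt_her[OF fx xf(2) pre_cmp[OF a B0(2) True]] .
      have e: "sh L a x = sh L b y" using p(4) unfolding fshift_sh seg_eq[OF fx ax] seg_eq[OF fy yf(2)] .
      note R = recon[OF fx fy ax yf(2) e]
      define z where "z = sh L a x"
      have fz: "is_filter L z" using sh_filter(1)[OF fx ax] z_def by simp
      have a0z: "a0 \<in> z" unfolding z_def sh_mem using B0(2) True xf(2) by simp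
      have nz: "b' \<notin> z" if "b' \<in> B0" for b'
      proof
        assume "b' \<in> z"
        then have "cmp L a b' \<in> x" unfolding z_def sh_mem by simp
        moreover have "cmp L a b' \<in> Neg" unfolding Neg_def using that by blast
        ultimately show False using xf(3) by blast
      qed
      have zB: "z \<in> B" unfolding Beq using fz a0z nz filters_def by blast
      have tz: "(a, b, z) \<in> spi_tri L" using R(1) z_def by simp
      have "spi_cls L a b z \<in> Sset L a b B" unfolding S_mem using zB tz by blast
      moreover have "fmap L (spi_cls L a b z) = p" using fmap_cls3[OF tz] R(2) z_def p(1) by simp
      ultimately show "p \<in> fmap L ` Sset L a b B" by (metis image_eqI)
    qed
    have Wg: "Wset P L (deg L a) (deg L b) U V \<in> {Wset P L m n U V | m n U V. m \<in> P \<and> n \<in> P \<and> openin (filter_top L) U \<and> openin (filter_top L) V}"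
      using deg_P[OF a] deg_P[OF b] oU oV by blast
    have "openin (subtopology (topology_generated_by {Wset P L m n U V | m n U V. m \<in> P \<and> n \<in> P \<and> openin (filter_top L) U \<and> openin (filter_top L) V}) (pg_set P L)) (Wset P L (deg L a) (deg L b) U V)"
      unfolding openin_subtopology using topology_generated_by_Basis[OF Wg] W_sub by blast
    then show ?thesis unfolding pg_top_eq SS eq .
  qed
qed


lemma open_filt_gen: assumes "openin (filter_top L) U"
  obtains Op where "generate_topology_on fgen Op" "U = Op \<inter> filters L"
proof -
  have "\<exists>Op. openin (topology_generated_by fgen) Op \<and> U = Op \<inter> filters L"
    using assms unfolding filter_top_eq openin_subtopology .
  then obtain Op where h: "openin (topology_generated_by fgen) Op" "U = Op \<inter> filters L" by (elim exE conjE)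
  show ?thesis by (rule that[OF openin_topology_generated_by[OF h(1)] h(2)])
qed

lemma open_ii: assumes m: "m \<in> P" and n: "n \<in> P" and U: "openin (filter_top L) U" and V: "openin (filter_top L) V"
  shows "openin (spi_top L) {c \<in> spi_set L. fmap L c \<in> Wset P L m n U V}"
proof -
  obtain O1 where O1: "generate_topology_on fgen O1" "U = O1 \<inter> filters L" by (rule open_filt_gen[OF U])
  obtain O2 where O2: "generate_topology_on fgen O2" "V = O2 \<inter> filters L" by (rule open_filt_gen[OF V])
  show ?thesis
  proof (rule openin_subopen[THEN iffD2], rule ballI)
    fix c assume "c \<in> {c \<in> spi_set L. fmap L c \<in> Wset P L m n U V}"
    then have c: "c \<in> spi_set L" "fmap L c \<in> Wset P L m n U V" by auto
    obtain x y where p: "fmap L c = (x, m - n, y)" "x \<in> U" "y \<in> V" "in_dom L x m" "in_dom L y n"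
      "fshift L x m = fshift L y n" using c(2) unfolding W_mem by blast
    have xF: "x \<in> filters L" using p(2) unfolding O1(2) by (rule IntD2)
    have yF: "y \<in> filters L" using p(3) unfolding O2(2) by (rule IntD2)
    have fx: "is_filter L x" and fy: "is_filter L y" using xF yF filters_def by auto
    define \<alpha> where "\<alpha> = seg L x m"
    define \<beta> where "\<beta> = seg L y n"
    have al: "\<alpha> \<in> x" "deg L \<alpha> = m" using seg_in[OF fx p(4)] \<alpha>_def by auto
    have be: "\<beta> \<in> y" "deg L \<beta> = n" using seg_in[OF fy p(5)] \<beta>_def by auto
    have e: "sh L \<alpha> x = sh L \<beta> y" using p(6) unfolding fshift_sh \<alpha>_def \<beta>_def .
    define z where "z = sh L \<alpha> x"
    note R = recon[OF fx fy al(1) be(1) e]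
    have tz: "(\<alpha>, \<beta>, z) \<in> spi_tri L" using R(1) z_def by simp
    have Ftz: "Ft L (\<alpha>, \<beta>, z) = fmap L c" using R(2) z_def p(1) al(2) be(2) by simp
    have tz': "\<alpha> \<in> Mor L" "\<beta> \<in> Mor L" "is_filter L z" "src L \<alpha> = frng L z" "src L \<beta> = frng L z"
      using tz tri_mem by blast+
    obtain a b x0 where t0: "(a, b, x0) \<in> spi_tri L" "c = spi_cls L a b x0" using spi_set_E[OF c(1)] by blast
    have "Ft L (a, b, x0) = Ft L (\<alpha>, \<beta>, z)" using fmap_cls3[OF t0(1)] t0(2) Ftz by simp
    then have cz: "c = spi_cls L \<alpha> \<beta> z" using cls_eq[OF t0(1) tz] t0(2) by simp
    have "fcat L \<alpha> z = x" using fcat_sh[OF fx al(1)] z_def by simp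
    then have a1: "fcat L \<alpha> z \<in> O1" using p(2) unfolding O1(2) by simp
    obtain P1 N1 where 1: "finite P1" "finite N1" "P1 \<subseteq> Mor L" "N1 \<subseteq> Mor L" "P1 \<subseteq> z" "N1 \<inter> z = {}"
      "\<forall>z'. is_filter L z' \<and> src L \<alpha> = frng L z' \<and> P1 \<subseteq> z' \<and> N1 \<inter> z' = {} \<longrightarrow> fcat L \<alpha> z' \<in> O1"
      using cont[OF O1(1) tz'(1) tz'(3) tz'(4) a1] by (elim exE conjE)
    have "fcat L \<beta> z = y" using fcat_sh[OF fy be(1)] e z_def by simp
    then have a2: "fcat L \<beta> z \<in> O2" using p(3) unfolding O2(2) by simp
    obtain P2 N2 where 2: "finite P2" "finite N2" "P2 \<subseteq> Mor L" "N2 \<subseteq> Mor L" "P2 \<subseteq> z" "N2 \<inter> z = {}"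
      "\<forall>z'. is_filter L z' \<and> src L \<beta> = frng L z' \<and> P2 \<subseteq> z' \<and> N2 \<inter> z' = {} \<longrightarrow> fcat L \<beta> z' \<in> O2"
      using cont[OF O2(1) tz'(2) tz'(3) tz'(5) a2] by (elim exE conjE)
    have h: "finite (P1 \<union> P2)" "finite (N1 \<union> N2)" "P1 \<union> P2 \<subseteq> z" "N1 \<union> N2 \<subseteq> Mor L" "(N1 \<union> N2) \<inter> z = {}"
      using 1 2 by auto
    obtain E where E: "E \<in> spi_basis L" "z \<in> E" "\<forall>z'\<in>E. is_filter L z' \<and> P1 \<union> P2 \<subseteq> z' \<and> (N1 \<union> N2) \<inter> z' = {}"
      using ehat_nbhd[OF tz'(3) h(1) h(2) h(3) h(4) h(5)] by blast
    have gen: "Sset L \<alpha> \<beta> E \<in> {Sset L a b B | a b B. a \<in> Mor L \<and> b \<in> Mor L \<and> B \<in> spi_basis L}"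
      using tz'(1,2) E(1) by blast
    have oT: "openin (spi_top L) (Sset L \<alpha> \<beta> E)"
      unfolding spi_top_eq openin_subtopology using topology_generated_by_Basis[OF gen] S_sub by blast
    have cT: "c \<in> Sset L \<alpha> \<beta> E" unfolding S_mem using cz E(2) tz by blast
    have TS: "Sset L \<alpha> \<beta> E \<subseteq> {c \<in> spi_set L. fmap L c \<in> Wset P L m n U V}"
    proof
      fix d assume "d \<in> Sset L \<alpha> \<beta> E"
      then obtain z' where d: "d = spi_cls L \<alpha> \<beta> z'" "z' \<in> E" "(\<alpha>, \<beta>, z') \<in> spi_tri L" unfolding S_mem by blast
      have z'p: "is_filter L z'" "P1 \<union> P2 \<subseteq> z'" "(N1 \<union> N2) \<inter> z' = {}" using E(3) d(2) by auto
      have s': "src L \<alpha> = frng L z'" "src L \<beta> = frng L z'" using d(3) tri_mem by blast+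
      have "fcat L \<alpha> z' \<in> O1" using 1(7) z'p s'(1) by blast
      moreover have "fcat L \<beta> z' \<in> O2" using 2(7) z'p s'(2) by blast
      moreover note FP = F_props[OF d(3)]
      ultimately have inU: "fcat L \<alpha> z' \<in> U" and inV: "fcat L \<beta> z' \<in> V" unfolding O1(2) O2(2) by auto
      have pp: "(fcat L \<alpha> z', deg L \<alpha> - deg L \<beta>, fcat L \<beta> z') \<in> pg_set P L" using F_in_pg[OF d(3)] unfolding Ft_simp .
      have fd: "fmap L d = (fcat L \<alpha> z', deg L \<alpha> - deg L \<beta>, fcat L \<beta> z')" using fmap_cls3[OF d(3)] d(1) Ft_simp by simp
      have pp': "(fcat L \<alpha> z', m - n, fcat L \<beta> z') \<in> pg_set P L" using pp al(2) be(2) by simp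
      have i1: "in_dom L (fcat L \<alpha> z') m" using FP(1) al(2) by simp
      have i2: "in_dom L (fcat L \<beta> z') n" using FP(2) be(2) by simp
      have fe: "fshift L (fcat L \<alpha> z') m = fshift L (fcat L \<beta> z') n" using FP(3,4) al(2) be(2) by simp
      have fd': "fmap L d = (fcat L \<alpha> z', m - n, fcat L \<beta> z')" using fd al(2) be(2) by simp
      have "fmap L d \<in> Wset P L m n U V" unfolding W_mem
        by (rule exI[of _ "fcat L \<alpha> z'"], rule exI[of _ "fcat L \<beta> z'"]) (use fd' pp' inU inV i1 i2 fe in blast)
      then show "d \<in> {c \<in> spi_set L. fmap L c \<in> Wset P L m n U V}" using cls_in[OF d(3)] d(1) by blast
    qed
    show "\<exists>T. openin (spi_top L) T \<and> c \<in> T \<and> T \<subseteq> {c \<in> spi_set L. fmap L c \<in> Wset P L m n U V}"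
      using oT cT TS by blast
  qed
qed


lemma SX_cover: "spi_set L \<subseteq> \<Union>{Sset L a b B | a b B. a \<in> Mor L \<and> b \<in> Mor L \<and> B \<in> spi_basis L}"
proof
  fix c assume c: "c \<in> spi_set L"
  obtain a b x where t: "(a, b, x) \<in> spi_tri L" "c = spi_cls L a b x" using spi_set_E[OF c] by blast
  have tt: "a \<in> Mor L" "b \<in> Mor L" "is_filter L x" using t(1) tri_mem by blast+
  have vM: "frng L x \<in> Mor L" using obj_mor[OF frng(1)[OF tt(3)]] .
  have EB: "Ehat L (frng L x) {} \<in> spi_basis L" unfolding spi_basis_def using vM by blast
  have "x \<in> Ehat L (frng L x) {}" unfolding Ehat_eq[OF vM empty_subsetI] using tt(3) frng(2)[OF tt(3)] filters_def by blast
  then have "c \<in> Sset L a b (Ehat L (frng L x) {})" unfolding S_mem using t by blast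
  moreover have "Sset L a b (Ehat L (frng L x) {}) \<in> {Sset L a b B | a b B. a \<in> Mor L \<and> b \<in> Mor L \<and> B \<in> spi_basis L}"
    using tt(1,2) EB by blast
  ultimately show "c \<in> \<Union>{Sset L a b B | a b B. a \<in> Mor L \<and> b \<in> Mor L \<and> B \<in> spi_basis L}" by (rule UnionI[rotated])
qed

lemma SY_cover: "pg_set P L \<subseteq> \<Union>{Wset P L m n U V | m n U V. m \<in> P \<and> n \<in> P \<and> openin (filter_top L) U \<and> openin (filter_top L) V}"
proof
  fix p assume pp: "p \<in> pg_set P L"
  obtain x q y where p: "p = (x, q, y)" by (cases p) auto
  obtain m n where A: "x \<in> filters L" "y \<in> filters L" "m \<in> P" "n \<in> P" "q = m - n" "in_dom L x m" "in_dom L y n"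
    "fshift L x m = fshift L y n" using pp unfolding p pg_mem by blast
  define Ua where "Ua = {w \<in> filters L. {} \<subseteq> w \<and> {} \<inter> w = {}}"
  have oU: "openin (filter_top L) Ua" unfolding Ua_def by (rule cyl_open) auto
  have pp': "(x, m - n, y) \<in> pg_set P L" using pp p A(5) by simp
  have xU: "x \<in> Ua" and yU: "y \<in> Ua" unfolding Ua_def using A(1,2) by auto
  have p': "p = (x, m - n, y)" using p A(5) by simp
  have "p \<in> Wset P L m n Ua Ua" unfolding W_mem
    by (rule exI[of _ x], rule exI[of _ y]) (use p' pp' xU yU A(6-8) in blast)
  moreover have "Wset P L m n Ua Ua \<in> {Wset P L m n U V | m n U V. m \<in> P \<and> n \<in> P \<and> openin (filter_top L) U \<and> openin (filter_top L) V}"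
    using A(3,4) oU by blast
  ultimately show "p \<in> \<Union>{Wset P L m n U V | m n U V. m \<in> P \<and> n \<in> P \<and> openin (filter_top L) U \<and> openin (filter_top L) V}"
    by (rule UnionI[rotated])
qed

lemma top_spi: "topspace (spi_top L) = spi_set L"
  unfolding spi_top_eq topspace_subtopology topology_generated_by_topspace by (rule Int_absorb1[OF SX_cover])

lemma top_pg: "topspace (pg_top P L) = pg_set P L"
  unfolding pg_top_eq topspace_subtopology topology_generated_by_topspace by (rule Int_absorb1[OF SY_cover])

lemma homeo: "homeomorphic_map (spi_top L) (pg_top P L) (fmap L)"
  unfolding spi_top_eq pg_top_eq
proof (rule homeo_generated[OF SX_cover SY_cover fmap_bij])
  fix s assume "s \<in> {Sset L a b B | a b B. a \<in> Mor L \<and> b \<in> Mor L \<and> B \<in> spi_basis L}"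
  then obtain a b B where h: "s = Sset L a b B" "a \<in> Mor L" "b \<in> Mor L" "B \<in> spi_basis L" by blast
  show "openin (subtopology (topology_generated_by {Wset P L m n U V | m n U V. m \<in> P \<and> n \<in> P \<and> openin (filter_top L) U \<and> openin (filter_top L) V}) (pg_set P L)) (fmap L ` (s \<inter> spi_set L))"
    unfolding h(1) pg_top_eq[symmetric] by (rule open_i[OF h(2) h(3) h(4)])
next
  fix s assume "s \<in> {Wset P L m n U V | m n U V. m \<in> P \<and> n \<in> P \<and> openin (filter_top L) U \<and> openin (filter_top L) V}"
  then obtain m n U V where h: "s = Wset P L m n U V" "m \<in> P" "n \<in> P" "openin (filter_top L) U" "openin (filter_top L) V" by blast
  show "openin (subtopology (topology_generated_by {Sset L a b B | a b B. a \<in> Mor L \<and> b \<in> Mor L \<and> B \<in> spi_basis L}) (spi_set L)) {p \<in> spi_set L. fmap L p \<in> s}"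
    unfolding h(1) spi_top_eq[symmetric] by (rule open_ii[OF h(2) h(3) h(4) h(5)])
qed

lemma main1: "top_groupoid_iso (spi_top L) (spi_set L) (spi_comp L) (spi_mult L) (spi_inv L)
               (pg_top P L) (pg_set P L) pg_comp pg_mult pg_inv (fmap L)"
  unfolding top_groupoid_iso_def
proof (intro conjI)
  show "bij_betw (fmap L) (spi_set L) (pg_set P L)" by (rule fmap_bij)
  show "homeomorphic_map (spi_top L) (pg_top P L) (fmap L)" by (rule homeo)
  show "\<forall>a\<in>spi_set L. \<forall>b\<in>spi_set L. spi_comp L a b = pg_comp (fmap L a) (fmap L b)"
    using comp_iff by blast
  show "\<forall>a\<in>spi_set L. \<forall>b\<in>spi_set L. spi_comp L a b \<longrightarrow> fmap L (spi_mult L a b) = pg_mult (fmap L a) (fmap L b)"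
    using mult_ok by blast
  show "\<forall>a\<in>spi_set L. fmap L (spi_inv L a) = pg_inv (fmap L a)"
    using inv_ok(1) by blast
qed

lemma mult_in: assumes c: "c \<in> spi_set L" and d: "d \<in> spi_set L" and cd: "spi_comp L c d"
  shows "spi_mult L c d \<in> spi_set L"
proof -
  have ex1: "\<exists>!e. mult_pred L c d e"
  proof -
    obtain e where e: "mult_pred L c d e" using mult_ex[OF assms] by blast
    have "e' = e" if "mult_pred L c d e'" for e'
      using mult_cand[OF that] mult_cand[OF e] fmap_inj unfolding inj_on_def by metis
    then show ?thesis using e by blast
  qed
  have "mult_pred L c d (spi_mult L c d)" unfolding spi_mult_pred by (rule theI'[OF ex1])
  then show ?thesis using mult_cand by blast
qed

lemma bdry_sub: "bdry L \<subseteq> filters L"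
proof -
  have "filter_top L closure_of max_filters L \<subseteq> topspace (filter_top L)" by (rule closure_of_subset_topspace)
  then show ?thesis unfolding bdry_def using filt_top_sub by (rule subset_trans)
qed

lemma unit_props: assumes "is_filter L z"
  shows "spi_unit L z \<in> spi_set L" "fmap L (spi_unit L z) = (z, 0, z)"
proof -
  have o: "frng L z \<in> Obj L" using frng(1)[OF assms] .
  have t: "(frng L z, frng L z, z) \<in> spi_tri L" unfolding tri_mem using obj_mor[OF o] obj_src[OF o] assms by simp
  show "spi_unit L z \<in> spi_set L" unfolding spi_unit_def using cls_in[OF t] .
  show "fmap L (spi_unit L z) = (z, 0, z)" unfolding spi_unit_def fmap_cls3[OF t] Ft_simp
    using fcat_obj[OF assms] by simp
qed

lemma unit_iff: assumes c: "c \<in> spi_set L" and m: "m \<in> spi_set L" and fm: "fmap L m = (x, 0, x)"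
  shows "m \<in> spi_unit L ` bdry L \<longleftrightarrow> x \<in> bdry L"
proof
  assume "m \<in> spi_unit L ` bdry L"
  then obtain z where z: "z \<in> bdry L" "m = spi_unit L z" by blast
  have "is_filter L z" using bdry_sub z(1) filters_def by blast
  then have "fmap L m = (z, 0, z)" using unit_props z(2) by simp
  then show "x \<in> bdry L" using fm z(1) by simp
next
  assume xb: "x \<in> bdry L"
  have fx: "is_filter L x" using bdry_sub xb filters_def by blast
  have "fmap L (spi_unit L x) = fmap L m" using unit_props(2)[OF fx] fm by simp
  then have "spi_unit L x = m" using fmap_inj unit_props(1)[OF fx] m unfolding inj_on_def by blast
  then show "m \<in> spi_unit L ` bdry L" using xb by blast
qed

lemma bspi_iff: assumes c: "c \<in> spi_set L"
  shows "c \<in> bspi_set L \<longleftrightarrow> fst (fmap L c) \<in> bdry L \<and> snd (snd (fmap L c)) \<in> bdry L"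
proof -
  obtain x q y where f: "fmap L c = (x, q, y)" by (cases "fmap L c") auto
  define ci where "ci = spi_inv L c"
  have ci: "ci \<in> spi_set L" "fmap L ci = (y, - q, x)" using inv_ok[OF c] f unfolding ci_def pg_inv_def by auto
  have c1: "spi_comp L c ci" using comp_iff[OF c ci(1)] f ci(2) unfolding pg_comp_def by simp
  have c2: "spi_comp L ci c" using comp_iff[OF ci(1) c] f ci(2) unfolding pg_comp_def by simp
  have m1: "spi_mult L c ci \<in> spi_set L" "fmap L (spi_mult L c ci) = (x, 0, x)"
    using mult_in[OF c ci(1) c1] mult_ok[OF c ci(1) c1] f ci(2) unfolding pg_mult_def by auto
  have m2: "spi_mult L ci c \<in> spi_set L" "fmap L (spi_mult L ci c) = (y, 0, y)"
    using mult_in[OF ci(1) c c2] mult_ok[OF ci(1) c c2] f ci(2) unfolding pg_mult_def by auto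
  have "c \<in> bspi_set L \<longleftrightarrow> spi_mult L c ci \<in> spi_unit L ` bdry L \<and> spi_mult L ci c \<in> spi_unit L ` bdry L"
    unfolding bspi_set_def ci_def using c by blast
  also have "\<dots> \<longleftrightarrow> x \<in> bdry L \<and> y \<in> bdry L" using unit_iff[OF c m1] unit_iff[OF c m2] by blast
  finally show ?thesis using f by simp
qed

lemma bimg: "fmap L ` bspi_set L = bpg_set P L"
proof
  have bs: "bspi_set L \<subseteq> spi_set L" unfolding bspi_set_def by blast
  show "fmap L ` bspi_set L \<subseteq> bpg_set P L"
  proof
    fix p assume "p \<in> fmap L ` bspi_set L"
    then obtain c where c: "c \<in> bspi_set L" "p = fmap L c" by blast
    have cs: "c \<in> spi_set L" using c(1) bs by blast
    have "fmap L c \<in> fmap L ` spi_set L" by (rule imageI[OF cs])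
    then have "p \<in> pg_set P L" unfolding fmap_image c(2) .
    then show "p \<in> bpg_set P L" unfolding bpg_set_def using bspi_iff[OF cs] c by blast
  qed
  show "bpg_set P L \<subseteq> fmap L ` bspi_set L"
  proof
    fix p assume p: "p \<in> bpg_set P L"
    then have "p \<in> pg_set P L" unfolding bpg_set_def by blast
    then have "p \<in> fmap L ` spi_set L" unfolding fmap_image .
    then obtain c where c: "c \<in> spi_set L" "p = fmap L c" by blast
    have "c \<in> bspi_set L" using bspi_iff[OF c(1)] p c(2) unfolding bpg_set_def by blast
    then show "p \<in> fmap L ` bspi_set L" using c(2) by blast
  qed
qed

lemma main2: "top_groupoid_iso
               (subtopology (spi_top L) (bspi_set L)) (bspi_set L) (spi_comp L) (spi_mult L) (spi_inv L)
               (subtopology (pg_top P L) (bpg_set P L)) (bpg_set P L) pg_comp pg_mult pg_inv (fmap L)"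
proof -
  have bs: "bspi_set L \<subseteq> spi_set L" unfolding bspi_set_def by blast
  have bp: "bpg_set P L \<subseteq> pg_set P L" unfolding bpg_set_def by blast
  have bij: "bij_betw (fmap L) (bspi_set L) (bpg_set P L)"
    unfolding bij_betw_def using inj_on_subset[OF fmap_inj bs] bimg by blast
  have "fmap L ` (topspace (spi_top L) \<inter> bspi_set L) = topspace (pg_top P L) \<inter> bpg_set P L"
    unfolding top_spi top_pg using bs bp bimg by (simp add: Int_absorb1)
  then have hm: "homeomorphic_map (subtopology (spi_top L) (bspi_set L)) (subtopology (pg_top P L) (bpg_set P L)) (fmap L)"
    by (rule homeomorphic_map_subtopologies[OF homeo])
  show ?thesis unfolding top_groupoid_iso_def
  proof (intro conjI)
    show "bij_betw (fmap L) (bspi_set L) (bpg_set P L)" by (rule bij)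
    show "homeomorphic_map (subtopology (spi_top L) (bspi_set L)) (subtopology (pg_top P L) (bpg_set P L)) (fmap L)" by (rule hm)
    show "\<forall>a\<in>bspi_set L. \<forall>b\<in>bspi_set L. spi_comp L a b = pg_comp (fmap L a) (fmap L b)"
      using comp_iff bs by blast
    show "\<forall>a\<in>bspi_set L. \<forall>b\<in>bspi_set L. spi_comp L a b \<longrightarrow> fmap L (spi_mult L a b) = pg_mult (fmap L a) (fmap L b)"
      using mult_ok bs by blast
    show "\<forall>a\<in>bspi_set L. fmap L (spi_inv L a) = pg_inv (fmap L a)"
      using inv_ok(1) bs by blast
  qed
qed

end

theorem theorem6p6:
  fixes P :: "'q::group_add set" and L :: "('a, 'q) pgraph"
  assumes "wqlo P" and "is_pgraph P L" and "finitely_aligned L"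
  shows "(\<exists>f. (\<forall>a b x. (a, b, x) \<in> spi_tri L \<longrightarrow>
               f (spi_cls L a b x) = (fcat L a x, deg L a - deg L b, fcat L b x)) \<and>
             top_groupoid_iso (spi_top L) (spi_set L) (spi_comp L) (spi_mult L) (spi_inv L)
               (pg_top P L) (pg_set P L) pg_comp pg_mult pg_inv f) \<and>
         (\<exists>f. top_groupoid_iso
               (subtopology (spi_top L) (bspi_set L)) (bspi_set L) (spi_comp L) (spi_mult L) (spi_inv L)
               (subtopology (pg_top P L) (bpg_set P L)) (bpg_set P L) pg_comp pg_mult pg_inv f)"
proof -
  interpret PG P L using assms by (rule PG.intro)
  have 1: "\<forall>a b x. (a, b, x) \<in> spi_tri L \<longrightarrow>
               fmap L (spi_cls L a b x) = (fcat L a x, deg L a - deg L b, fcat L b x)"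
    using fmap_cls3 by (simp add: Ft_simp)
  show ?thesis
  proof (intro conjI)
    show "\<exists>f. (\<forall>a b x. (a, b, x) \<in> spi_tri L \<longrightarrow>
               f (spi_cls L a b x) = (fcat L a x, deg L a - deg L b, fcat L b x)) \<and>
             top_groupoid_iso (spi_top L) (spi_set L) (spi_comp L) (spi_mult L) (spi_inv L)
               (pg_top P L) (pg_set P L) pg_comp pg_mult pg_inv f"
      using 1 main1 by blast
    show "\<exists>f. top_groupoid_iso
               (subtopology (spi_top L) (bspi_set L)) (bspi_set L) (spi_comp L) (spi_mult L) (spi_inv L)
               (subtopology (pg_top P L) (bpg_set P L)) (bpg_set P L) pg_comp pg_mult pg_inv f"
      using main2 by blast
  qed
qed

end
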